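(* Let $V$ be a simple unitary vertex operator algebra, let $b\in V_d$ satisfy energy bounds, let $p\in\mathbb{Z}_{\geq 0}$ and let $a\in V$ be a primary vector of conformal dimension $d_a\neq 1$. Then there are real numbers $C\geq 0$ and $r\geq 0$ such that $$\|(b_{-p}a)_0\|_n\leq C(1+|n|)^r\,\|a_0\|_{n+d}$$ for all $n\in\mathbb{Z}$.
   Context: A simple unitary vertex operator algebra is a vertex operator algebra $V$ (over $\mathbb{C}$) of CFT type, i.e. $V=\bigoplus_{n\geq 0}V_n$ with $V_n=\ker(L_0-n1_V)$ and $V_0=\mathbb{C}\Omega$, with vacuum $\Omega$ and conformal vector $\nu$, $Y(\nu,z)=\sum_{n}L_nz^{-n-2}$, equipped with a scalar product $(\cdot|\cdot)$ with $(\Omega|\Omega)=1$ and an antilinear involution $a\mapsto a^*$ with $\nu^*=\nu$ such that $(b|a_nc)=(a^*_{-n}b|c)$ for all $a,b,c\in V$, $n\in\mathbb{Z}$. For $a\in V$ the modes $a_n$ are defined by $Y(z^{L_0}a,z)=\sum_{n}a_nz^{-n}$. A vector $a$ is primary of conformal dimension $d$ if $a\in V_d$ and $L_ka=0$ for all $k>0$. Write $\|a\|=\sqrt{(a|a)}$, $V_{\leq n}=\bigoplus_{k\leq n}V_k$ (so $V_{\leq n}=\{0\}$ for $n<0$), $\|R\|_n:=\sup\{\|Rb\|: b\in V_{\leq n},\|b\|\leq 1\}\in[0,+\infty]$. A vector $b$ satisfies energy bounds if there are real $s,C,t\geq0$ with $\|b_m\|_n\leq C(1+|m|)^t(1+|n|)^s$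 for all $m,n\in\mathbb{Z}$. *)

theory Defs
  imports "HOL-Analysis.Analysis"
begin

text \<open>
  A vertex operator algebra is given by an abelian group 'v with a complex scalar
  multiplication sc, a mode map md (standard modes: Y(a,z) = sum over n of
  md a n times z to the power -n-1), the vacuum vac and the conformal vector cv.
\<close>

definition Vir :: "('v \<Rightarrow> int \<Rightarrow> 'v \<Rightarrow> 'v) \<Rightarrow> 'v \<Rightarrow> int \<Rightarrow> 'v \<Rightarrow> 'v" where
  "Vir md cv n = md cv (n + 1)"

definition grade_decomp ::
  "(complex \<Rightarrow> 'v::ab_group_add \<Rightarrow> 'v) \<Rightarrow> ('v \<Rightarrow> int \<Rightarrow> 'v \<Rightarrow> 'v) \<Rightarrow> 'v \<Rightarrow> 'v \<Rightarrow> (nat \<Rightarrow> 'v) \<Rightarrow> bool" where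
  "grade_decomp sc md cv v w \<longleftrightarrow>
     (\<forall>j. Vir md cv 0 (w j) = sc (of_nat j) (w j)) \<and> finite {j. w j \<noteq> 0} \<and> v = sum w {j. w j \<noteq> 0}"

definition proj ::
  "(complex \<Rightarrow> 'v::ab_group_add \<Rightarrow> 'v) \<Rightarrow> ('v \<Rightarrow> int \<Rightarrow> 'v \<Rightarrow> 'v) \<Rightarrow> 'v \<Rightarrow> nat \<Rightarrow> 'v \<Rightarrow> 'v" where
  "proj sc md cv k v = (SOME w. grade_decomp sc md cv v w) k"

text \<open>The paper's modes a_n, defined by Y(z^{L0} a, z) = sum_n a_n z^{-n}:
  for a in V_k, a_n = md a (n + k - 1); extended linearly.\<close>
definition pmode ::
  "(complex \<Rightarrow> 'v::ab_group_add \<Rightarrow> 'v) \<Rightarrow> ('v \<Rightarrow> int \<Rightarrow> 'v \<Rightarrow> 'v) \<Rightarrow> 'v \<Rightarrow> 'v \<Rightarrow> int \<Rightarrow> 'v \<Rightarrow> 'v" where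
  "pmode sc md cv a n c = (\<Sum>k | proj sc md cv k a \<noteq> 0. md (proj sc md cv k a) (n + int k - 1) c)"

definition vnorm :: "('v \<Rightarrow> 'v \<Rightarrow> complex) \<Rightarrow> 'v \<Rightarrow> real" where
  "vnorm ip v = sqrt (Re (ip v v))"

definition Vle ::
  "(complex \<Rightarrow> 'v::ab_group_add \<Rightarrow> 'v) \<Rightarrow> ('v \<Rightarrow> int \<Rightarrow> 'v \<Rightarrow> 'v) \<Rightarrow> 'v \<Rightarrow> int \<Rightarrow> 'v set" where
  "Vle sc md cv n = {v. \<forall>k. proj sc md cv k v \<noteq> 0 \<longrightarrow> int k \<le> n}"

definition opnorm ::
  "(complex \<Rightarrow> 'v::ab_group_add \<Rightarrow> 'v) \<Rightarrow> ('v \<Rightarrow> int \<Rightarrow> 'v \<Rightarrow> 'v) \<Rightarrow> 'v \<Rightarrow> ('v \<Rightarrow> 'v \<Rightarrow> complex)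
    \<Rightarrow> int \<Rightarrow> ('v \<Rightarrow> 'v) \<Rightarrow> ereal" where
  "opnorm sc md cv ip n R =
     Sup {ereal (vnorm ip (R b)) | b. b \<in> Vle sc md cv n \<and> vnorm ip b \<le> 1}"

definition is_VOA ::
  "(complex \<Rightarrow> 'v::ab_group_add \<Rightarrow> 'v) \<Rightarrow> ('v \<Rightarrow> int \<Rightarrow> 'v \<Rightarrow> 'v) \<Rightarrow> 'v \<Rightarrow> 'v \<Rightarrow> bool" where
  "is_VOA sc md vac cv \<longleftrightarrow>
     vector_space sc \<and>
     (\<forall>a n. Vector_Spaces.linear sc sc (md a n)) \<and>
     (\<forall>n c. Vector_Spaces.linear sc sc (\<lambda>a. md a n c)) \<and>
     \<comment> \<open>truncation\<close>
     (\<forall>a b. \<exists>N. \<forall>n\<ge>N. md a n b = 0) \<and>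
     \<comment> \<open>vacuum axioms\<close>
     (\<forall>n v. md vac n v = (if n = -1 then v else 0)) \<and>
     (\<forall>a. md a (-1) vac = a \<and> (\<forall>n\<ge>0. md a n vac = 0)) \<and>
     \<comment> \<open>Borcherds (Jacobi) identity; all sums are finite by truncation\<close>
     (\<forall>a b c m n k. \<exists>N0. \<forall>N\<ge>N0.
        (\<Sum>i\<le>N. sc ((of_int m) gchoose i) (md (md a (k + int i) b) (m + n - int i) c)) =
        (\<Sum>i\<le>N. sc ((-1)^i * ((of_int k) gchoose i))
            (md a (m + k - int i) (md b (n + int i) c)
             - sc ((-1) powi k) (md b (n + k - int i) (md a (m + int i) c))))) \<and>
     \<comment> \<open>Virasoro relations with some central charge\<close>
     (\<exists>cc::complex. \<forall>m n v.
        Vir md cv m (Vir md cv n v) - Vir md cv n (Vir md cv m v) =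
        sc (of_int (m - n)) (Vir md cv (m + n) v)
        + (if m + n = 0 then sc (cc / 12 * (of_int m ^ 3 - of_int m)) v else 0)) \<and>
     \<comment> \<open>translation: L_{-1} is the derivation\<close>
     (\<forall>a n v. md (Vir md cv (-1) a) n v = sc (- of_int n) (md a (n - 1) v)) \<and>
     \<comment> \<open>grading by L_0 with nonnegative integer eigenvalues\<close>
     (\<forall>v. \<exists>w. grade_decomp sc md cv v w) \<and>
     \<comment> \<open>finite-dimensional homogeneous subspaces\<close>
     (\<forall>k::nat. \<exists>B. finite B \<and> module.span sc B = {v. Vir md cv 0 v = sc (of_nat k) v})"

definition is_simple_unitary_CFT_VOA ::
  "(complex \<Rightarrow> 'v::ab_group_add \<Rightarrow> 'v) \<Rightarrow> ('v \<Rightarrow> int \<Rightarrow> 'v \<Rightarrow> 'v) \<Rightarrow> 'v \<Rightarrow> 'v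
    \<Rightarrow> ('v \<Rightarrow> 'v \<Rightarrow> complex) \<Rightarrow> ('v \<Rightarrow> 'v) \<Rightarrow> bool" where
  "is_simple_unitary_CFT_VOA sc md vac cv ip star \<longleftrightarrow>
     is_VOA sc md vac cv \<and>
     \<comment> \<open>CFT type: V_0 = C vac\<close>
     {v. Vir md cv 0 v = 0} = {sc c vac | c. True} \<and>
     \<comment> \<open>simple: no nontrivial ideals\<close>
     (\<forall>I. module.subspace sc I \<and> (\<forall>a n x. x \<in> I \<longrightarrow> md a n x \<in> I) \<longrightarrow> I = {0} \<or> I = UNIV) \<and>
     \<comment> \<open>scalar product: linear in the first, antilinear in the second variable\<close>
     (\<forall>x y z. ip (x + y) z = ip x z + ip y z) \<and>
     (\<forall>c x y. ip (sc c x) y = c * ip x y) \<and>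
     (\<forall>x y. ip y x = cnj (ip x y)) \<and>
     (\<forall>x. ip x x \<in> \<real> \<and> Re (ip x x) \<ge> 0 \<and> (ip x x = 0 \<longleftrightarrow> x = 0)) \<and>
     ip vac vac = 1 \<and>
     \<comment> \<open>antilinear involution\<close>
     (\<forall>x y. star (x + y) = star x + star y) \<and>
     (\<forall>c x. star (sc c x) = sc (cnj c) (star x)) \<and>
     (\<forall>x. star (star x) = x) \<and>
     star cv = cv \<and>
     \<comment> \<open>invariance\<close>
     (\<forall>a b c n. ip b (pmode sc md cv a n c) = ip (pmode sc md cv (star a) (- n) b) c)"

definition primary ::
  "(complex \<Rightarrow> 'v::ab_group_add \<Rightarrow> 'v) \<Rightarrow> ('v \<Rightarrow> int \<Rightarrow> 'v \<Rightarrow> 'v) \<Rightarrow> 'v \<Rightarrow> 'v \<Rightarrow> nat \<Rightarrow> bool" where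
  "primary sc md cv a d \<longleftrightarrow> Vir md cv 0 a = sc (of_nat d) a \<and> (\<forall>k>0. Vir md cv k a = 0)"

definition energy_bounded ::
  "(complex \<Rightarrow> 'v::ab_group_add \<Rightarrow> 'v) \<Rightarrow> ('v \<Rightarrow> int \<Rightarrow> 'v \<Rightarrow> 'v) \<Rightarrow> 'v \<Rightarrow> ('v \<Rightarrow> 'v \<Rightarrow> complex)
    \<Rightarrow> 'v \<Rightarrow> bool" where
  "energy_bounded sc md cv ip b \<longleftrightarrow>
     (\<exists>s C t::real. s \<ge> 0 \<and> C \<ge> 0 \<and> t \<ge> 0 \<and>
        (\<forall>m n::int. opnorm sc md cv ip n (pmode sc md cv b m)
            \<le> ereal (C * (1 + \<bar>real_of_int m\<bar>) powr t * (1 + \<bar>real_of_int n\<bar>) powr s)))"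

end

theory Submission
  imports Defs
begin

locale svoa =
  fixes sc :: "complex \<Rightarrow> 'v::ab_group_add \<Rightarrow> 'v"
    and md :: "'v \<Rightarrow> int \<Rightarrow> 'v \<Rightarrow> 'v"
    and vac cv :: 'v
    and ip :: "'v \<Rightarrow> 'v \<Rightarrow> complex"
    and star :: "'v \<Rightarrow> 'v"
  assumes S: "is_simple_unitary_CFT_VOA sc md vac cv ip star"
begin

abbreviation L where "L \<equiv> Vir md cv"

lemmas SV = S[unfolded is_simple_unitary_CFT_VOA_def, THEN conjunct1, unfolded is_VOA_def]
lemmas SR = S[unfolded is_simple_unitary_CFT_VOA_def, THEN conjunct2]
lemmas V1 = SV[THEN conjunct1]
lemmas V2 = SV[THEN conjunct2, THEN conjunct1]
lemmas V3 = SV[THEN conjunct2, THEN conjunct2, THEN conjunct1]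
lemmas V4 = SV[THEN conjunct2, THEN conjunct2, THEN conjunct2, THEN conjunct1]
lemmas V5 = SV[THEN conjunct2, THEN conjunct2, THEN conjunct2, THEN conjunct2, THEN conjunct1]
lemmas V6 = SV[THEN conjunct2, THEN conjunct2, THEN conjunct2, THEN conjunct2, THEN conjunct2, THEN conjunct1]
lemmas V7 = SV[THEN conjunct2, THEN conjunct2, THEN conjunct2, THEN conjunct2, THEN conjunct2, THEN conjunct2, THEN conjunct1]
lemmas V8 = SV[THEN conjunct2, THEN conjunct2, THEN conjunct2, THEN conjunct2, THEN conjunct2, THEN conjunct2, THEN conjunct2, THEN conjunct1]
lemmas V9 = SV[THEN conjunct2, THEN conjunct2, THEN conjunct2, THEN conjunct2, THEN conjunct2, THEN conjunct2, THEN conjunct2, THEN conjunct2, THEN conjunct1]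
lemmas V10 = SV[THEN conjunct2, THEN conjunct2, THEN conjunct2, THEN conjunct2, THEN conjunct2, THEN conjunct2, THEN conjunct2, THEN conjunct2, THEN conjunct2, THEN conjunct1]
lemmas R1 = SR[THEN conjunct1]
lemmas R2 = SR[THEN conjunct2, THEN conjunct1]
lemmas R3 = SR[THEN conjunct2, THEN conjunct2, THEN conjunct1]
lemmas R4 = SR[THEN conjunct2, THEN conjunct2, THEN conjunct2, THEN conjunct1]
lemmas R5 = SR[THEN conjunct2, THEN conjunct2, THEN conjunct2, THEN conjunct2, THEN conjunct1]
lemmas R6 = SR[THEN conjunct2, THEN conjunct2, THEN conjunct2, THEN conjunct2, THEN conjunct2, THEN conjunct1]
lemmas R7 = SR[THEN conjunct2, THEN conjunct2, THEN conjunct2, THEN conjunct2, THEN conjunct2, THEN conjunct2, THEN conjunct1]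
lemmas R8 = SR[THEN conjunct2, THEN conjunct2, THEN conjunct2, THEN conjunct2, THEN conjunct2, THEN conjunct2, THEN conjunct2, THEN conjunct1]
lemmas R12 = SR[THEN conjunct2, THEN conjunct2, THEN conjunct2, THEN conjunct2, THEN conjunct2, THEN conjunct2, THEN conjunct2, THEN conjunct2, THEN conjunct2, THEN conjunct2, THEN conjunct1]
lemmas R13 = SR[THEN conjunct2, THEN conjunct2, THEN conjunct2, THEN conjunct2, THEN conjunct2, THEN conjunct2, THEN conjunct2, THEN conjunct2, THEN conjunct2, THEN conjunct2, THEN conjunct2]

lemma vs: "vector_space sc" by (rule V1)

sublocale V: vector_space sc by (rule vs)

lemma lin_md: "Vector_Spaces.linear sc sc (md a n)"
  using V2 by blast
lemma lin_md1: "Vector_Spaces.linear sc sc (\<lambda>a. md a n c)"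
  using V3 by blast

lemma md_add: "md a n (x + y) = md a n x + md a n y"
  using lin_md unfolding Vector_Spaces.linear_iff by blast
lemma md_scale: "md a n (sc c x) = sc c (md a n x)"
  using lin_md unfolding Vector_Spaces.linear_iff by blast
lemma md_add1: "md (x + y) n c = md x n c + md y n c"
  using lin_md1[of n c] unfolding Vector_Spaces.linear_iff by blast
lemma md_scale1: "md (sc r x) n c = sc r (md x n c)"
  using lin_md1[of n c] unfolding Vector_Spaces.linear_iff by blast
lemma md_zero[simp]: "md a n 0 = 0"
  using md_scale[of a n 0 0] by simp
lemma md_zero1[simp]: "md 0 n c = 0"
  using md_scale1[of 0 0 n c] by simp
lemma md_diff: "md a n (x - y) = md a n x - md a n y"
  by (metis add_diff_cancel md_add diff_add_cancel)
lemma md_diff1: "md (x - y) n c = md x n c - md y n c"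
  by (metis add_diff_cancel md_add1 diff_add_cancel)
lemma md_sum: "md a n (sum f A) = (\<Sum>i\<in>A. md a n (f i))"
  by (induct A rule: infinite_finite_induct) (auto simp: md_add)
lemma md_sum1: "md (sum f A) n c = (\<Sum>i\<in>A. md (f i) n c)"
  by (induct A rule: infinite_finite_induct) (auto simp: md_add1)

lemma L_add: "L n (x + y) = L n x + L n y" unfolding Vir_def by (rule md_add)
lemma L_scale: "L n (sc c x) = sc c (L n x)" unfolding Vir_def by (rule md_scale)
lemma L_zero[simp]: "L n 0 = 0" unfolding Vir_def by simp
lemma L_diff: "L n (x - y) = L n x - L n y" unfolding Vir_def by (rule md_diff)
lemma L_sum: "L n (sum f A) = (\<Sum>i\<in>A. L n (f i))" unfolding Vir_def by (rule md_sum)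

lemma trunc: "\<exists>N. \<forall>n\<ge>N. md a n b = 0"
  using V4 by blast
lemma vac_md: "md vac n v = (if n = -1 then v else 0)"
  using V5 by blast
lemma md_vac: "md a (-1) vac = a"
  using V6 by blast
lemma borch: "\<exists>N0. \<forall>N\<ge>N0.
        (\<Sum>i\<le>N. sc ((of_int m) gchoose i) (md (md a (k + int i) b) (m + n - int i) c)) =
        (\<Sum>i\<le>N. sc ((-1)^i * ((of_int k) gchoose i))
            (md a (m + k - int i) (md b (n + int i) c)
             - sc ((-1) powi k) (md b (n + k - int i) (md a (m + int i) c))))"
  using V7 by (elim allE) assumption
lemma virasoro: "\<exists>cc::complex. \<forall>m n v.
        L m (L n v) - L n (L m v) =
        sc (of_int (m - n)) (L (m + n) v)
        + (if m + n = 0 then sc (cc / 12 * (of_int m ^ 3 - of_int m)) v else 0)"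
  using V8 unfolding Vir_def by assumption
lemma transl: "md (L (-1) a) n v = sc (- of_int n) (md a (n - 1) v)"
  using V9 by blast
lemma grading: "\<exists>w. grade_decomp sc md cv v w"
  using V10 by blast

lemma ip_add1: "ip (x + y) z = ip x z + ip y z"
  using R3 by blast
lemma ip_scale1: "ip (sc c x) y = c * ip x y"
  using R4 by blast
lemma ip_cnj: "ip y x = cnj (ip x y)"
  using R5 by blast
lemma ip_pos: "ip x x \<in> \<real> \<and> Re (ip x x) \<ge> 0 \<and> (ip x x = 0 \<longleftrightarrow> x = 0)"
  using R6 by blast
lemma star_cv: "star cv = cv"
  using R12 by blast
lemma invar: "ip b (pmode sc md cv a n c) = ip (pmode sc md cv (star a) (- n) b) c"
  using R13 by blast

end

context svoa begin

definition hom :: "nat \<Rightarrow> 'v \<Rightarrow> bool" where "hom k v \<longleftrightarrow> L 0 v = sc (of_nat k) v"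

abbreviation proj' where "proj' \<equiv> proj sc md cv"
abbreviation Vle' where "Vle' \<equiv> Vle sc md cv"

lemma eig_indep:
  assumes "finite S" "\<forall>j\<in>S. L 0 (w j) = sc (of_nat j) (w j)" "(\<Sum>j\<in>S. w j) = 0"
  shows "\<forall>j\<in>S. w j = 0"
  using assms
proof (induction S arbitrary: w rule: finite_induct)
  case empty then show ?case by simp
next
  case (insert j0 S)
  define w' where "w' j = sc (of_nat j - of_nat j0) (w j)" for j
  have e: "\<forall>j\<in>S. L 0 (w' j) = sc (of_nat j) (w' j)"
    using insert.prems(1) by (simp add: w'_def L_scale mult.commute)
  have "L 0 (\<Sum>j\<in>insert j0 S. w j) - sc (of_nat j0) (\<Sum>j\<in>insert j0 S. w j) = 0"
    using insert.prems(2) by simp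
  hence "(\<Sum>j\<in>insert j0 S. L 0 (w j) - sc (of_nat j0) (w j)) = 0"
    by (simp add: L_sum V.scale_sum_right sum_subtractf)
  hence "(\<Sum>j\<in>insert j0 S. w' j) = 0"
    using insert.prems(1) by (simp add: w'_def V.scale_left_diff_distrib)
  hence "(\<Sum>j\<in>S. w' j) = 0" using insert.hyps by (simp add: w'_def)
  hence z: "\<forall>j\<in>S. w' j = 0" by (rule insert.IH[OF e])
  have "\<forall>j\<in>S. w j = 0"
  proof
    fix j assume "j \<in> S"
    hence "j \<noteq> j0" using insert.hyps by auto
    hence "(of_nat j - of_nat j0 :: complex) \<noteq> 0" by simp
    moreover have "sc (of_nat j - of_nat j0) (w j) = 0" using z \<open>j\<in>S\<close> by (simp add: w'_def)
    ultimately show "w j = 0" by (simp add: V.scale_eq_0_iff)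
  qed
  moreover hence "w j0 = 0" using insert.prems(2) insert.hyps by simp
  ultimately show ?case by simp
qed

definition GD' where "GD' v w S \<longleftrightarrow> (\<forall>j. L 0 (w j) = sc (of_nat j) (w j)) \<and> finite S \<and> (\<forall>j. j \<notin> S \<longrightarrow> w j = 0) \<and> v = sum w S"

lemma GD'_GD: "GD' v w S \<Longrightarrow> grade_decomp sc md cv v w"
  unfolding GD'_def grade_decomp_def
  apply (intro conjI)
    apply simp
   apply (metis (mono_tags, lifting) finite_subset mem_Collect_eq subsetI)
  apply (elim conjE)
  apply (erule ssubst[of v])
  apply (rule sum.mono_neutral_right)
  by auto

lemma GD_GD': "grade_decomp sc md cv v w \<Longrightarrow> GD' v w {j. w j \<noteq> 0}"
  unfolding GD'_def grade_decomp_def by auto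

lemma gd_unique:
  assumes "grade_decomp sc md cv v w1" "grade_decomp sc md cv v w2"
  shows "w1 = w2"
proof -
  define S where "S = {j. w1 j \<noteq> 0} \<union> {j. w2 j \<noteq> 0}"
  have f1: "finite {j. w1 j \<noteq> 0}" and f2: "finite {j. w2 j \<noteq> 0}"
    using assms unfolding grade_decomp_def by blast+
  have f: "finite S" unfolding S_def using f1 f2 by (rule finite_UnI)
  have v1: "v = sum w1 {j. w1 j \<noteq> 0}" using assms(1) unfolding grade_decomp_def by blast
  have v2: "v = sum w2 {j. w2 j \<noteq> 0}" using assms(2) unfolding grade_decomp_def by blast
  have "sum w1 {j. w1 j \<noteq> 0} = sum w1 S"
    by (rule sum.mono_neutral_left[OF f]) (auto simp: S_def)
  with v1 have s1: "v = sum w1 S" by (rule trans)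
  have "sum w2 {j. w2 j \<noteq> 0} = sum w2 S"
    by (rule sum.mono_neutral_left[OF f]) (auto simp: S_def)
  with v2 have s2: "v = sum w2 S" by (rule trans)
  have z: "(\<Sum>j\<in>S. w1 j - w2 j) = 0" unfolding sum_subtractf using s1 s2 by simp
  have e1: "\<forall>j. L 0 (w1 j) = sc (of_nat j) (w1 j)" using assms(1) unfolding grade_decomp_def by blast
  have e2: "\<forall>j. L 0 (w2 j) = sc (of_nat j) (w2 j)" using assms(2) unfolding grade_decomp_def by blast
  have e: "\<forall>j\<in>S. L 0 (w1 j - w2 j) = sc (of_nat j) (w1 j - w2 j)"
    using e1 e2 by (simp add: L_diff V.scale_right_diff_distrib)
  have z2: "\<forall>j\<in>S. w1 j - w2 j = 0" by (rule eig_indep[OF f, where w="\<lambda>j. w1 j - w2 j", OF e z])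
  show ?thesis
  proof (rule ext)
    fix j show "w1 j = w2 j"
    proof (cases "j \<in> S")
      case True thus ?thesis using z2 by simp
    next
      case False thus ?thesis unfolding S_def by simp
    qed
  qed
qed

lemma gd_proj: "grade_decomp sc md cv v (\<lambda>k. proj' k v)"
proof -
  have "grade_decomp sc md cv v (SOME w. grade_decomp sc md cv v w)" using grading by (rule someI_ex)
  thus ?thesis unfolding proj_def by simp
qed

lemma proj_eq: "grade_decomp sc md cv v w \<Longrightarrow> proj' k v = w k"
  using gd_unique[OF gd_proj] by metis

lemma proj_eq': "GD' v w S \<Longrightarrow> proj' k v = w k"
  using proj_eq GD'_GD by metis

lemma hom_proj: "hom k (proj' k v)"
  using gd_proj unfolding grade_decomp_def hom_def by blast

lemma proj_finite: "finite {k. proj' k v \<noteq> 0}"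
  using gd_proj unfolding grade_decomp_def by blast

lemma proj_sum_eq: "finite S \<Longrightarrow> (\<forall>k. k \<notin> S \<longrightarrow> proj' k v = 0) \<Longrightarrow> v = (\<Sum>k\<in>S. proj' k v)"
proof -
  assume a: "finite S" "\<forall>k. k \<notin> S \<longrightarrow> proj' k v = 0"
  have "v = (\<Sum>k | proj' k v \<noteq> 0. proj' k v)" using gd_proj[of v] unfolding grade_decomp_def by blast
  also have "\<dots> = (\<Sum>k\<in>S. proj' k v)" by (rule sum.mono_neutral_left) (use a in auto)
  finally show ?thesis .
qed

lemma proj_add: "proj' k (x + y) = proj' k x + proj' k y"
proof -
  let ?S = "{k. proj' k x \<noteq> 0} \<union> {k. proj' k y \<noteq> 0}"
  have "GD' (x + y) (\<lambda>k. proj' k x + proj' k y) ?S"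
    unfolding GD'_def
  proof (intro conjI allI impI)
    fix j show "L 0 (proj' j x + proj' j y) = sc (of_nat j) (proj' j x + proj' j y)"
      using hom_proj[of j x] hom_proj[of j y] unfolding hom_def by (simp add: L_add V.scale_right_distrib)
  next
    show "finite ?S" using proj_finite by auto
  next
    fix j assume "j \<notin> ?S" thus "proj' j x + proj' j y = 0" by auto
  next
    have "(\<Sum>k\<in>?S. proj' k x) = x" by (rule proj_sum_eq[symmetric]) (use proj_finite in auto)
    moreover have "(\<Sum>k\<in>?S. proj' k y) = y" by (rule proj_sum_eq[symmetric]) (use proj_finite in auto)
    ultimately show "x + y = (\<Sum>k\<in>?S. proj' k x + proj' k y)" by (simp add: sum.distrib)
  qed
  thus ?thesis by (rule proj_eq')
qed

lemma proj_scale: "proj' k (sc c x) = sc c (proj' k x)"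
proof -
  let ?S = "{k. proj' k x \<noteq> 0}"
  have "GD' (sc c x) (\<lambda>k. sc c (proj' k x)) ?S"
    unfolding GD'_def
  proof (intro conjI allI impI)
    fix j show "L 0 (sc c (proj' j x)) = sc (of_nat j) (sc c (proj' j x))"
      using hom_proj[of j x] unfolding hom_def by (simp add: L_scale mult.commute)
  next
    show "finite ?S" using proj_finite by auto
  next
    fix j assume "j \<notin> ?S" thus "sc c (proj' j x) = 0" by auto
  next
    have "x = (\<Sum>k\<in>?S. proj' k x)" by (rule proj_sum_eq) (use proj_finite in auto)
    thus "sc c x = (\<Sum>k\<in>?S. sc c (proj' k x))" by (metis V.scale_sum_right)
  qed
  thus ?thesis by (rule proj_eq')
qed

lemma proj_zero[simp]: "proj' k 0 = 0"
  using proj_scale[of k 0 0] by simp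

lemma proj_diff: "proj' k (x - y) = proj' k x - proj' k y"
  by (metis add_diff_cancel diff_add_cancel proj_add)

lemma proj_sum: "proj' k (sum f A) = (\<Sum>i\<in>A. proj' k (f i))"
  by (induct A rule: infinite_finite_induct) (auto simp: proj_add)

lemma proj_hom: "hom j v \<Longrightarrow> proj' k v = (if k = j then v else 0)"
  apply (rule proj_eq'[where S="{j}"])
  unfolding GD'_def hom_def by auto

lemma eig_zero:
  assumes "L 0 v = sc c v" "\<forall>k. c \<noteq> of_nat k"
  shows "v = 0"
proof -
  let ?S = "{k. proj' k v \<noteq> 0}"
  have f: "finite ?S" by (rule proj_finite)
  have vs: "v = (\<Sum>k\<in>?S. proj' k v)" by (rule proj_sum_eq) (use f in auto)
  have "L 0 v - sc c v = 0" using assms by simp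
  hence "(\<Sum>k\<in>?S. L 0 (proj' k v) - sc c (proj' k v)) = 0"
    by (subst (asm) (1 2) vs) (simp add: L_sum V.scale_sum_right sum_subtractf)
  hence "(\<Sum>k\<in>?S. sc (of_nat k - c) (proj' k v)) = 0"
    using hom_proj unfolding hom_def by (simp add: V.scale_left_diff_distrib)
  moreover have "\<forall>j\<in>?S. L 0 (sc (of_nat j - c) (proj' j v)) = sc (of_nat j) (sc (of_nat j - c) (proj' j v))"
    using hom_proj unfolding hom_def by (simp add: L_scale mult.commute)
  ultimately have "\<forall>j\<in>?S. sc (of_nat j - c) (proj' j v) = 0"
    by (intro eig_indep[OF f, of "\<lambda>j. sc (of_nat j - c) (proj' j v)"])
  moreover have "\<forall>j. of_nat j - c \<noteq> 0"
  proof
    fix j show "of_nat j - c \<noteq> 0" using assms(2)[rule_format, of j] by simp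
  qed
  ultimately have "\<forall>j\<in>?S. proj' j v = 0" by (simp add: V.scale_eq_0_iff)
  hence "(\<Sum>k\<in>?S. proj' k v) = 0" by simp
  with vs show ?thesis by (rule trans)
qed

lemma Vle_iff: "v \<in> Vle' N \<longleftrightarrow> (\<forall>k. proj' k v \<noteq> 0 \<longrightarrow> int k \<le> N)"
  unfolding Vle_def by simp

lemma Vle_zero[simp]: "0 \<in> Vle' N" unfolding Vle_iff by simp
lemma Vle_add: assumes "x \<in> Vle' N" "y \<in> Vle' N" shows "x + y \<in> Vle' N"
  unfolding Vle_iff proj_add
proof (intro allI impI)
  fix k assume "proj' k x + proj' k y \<noteq> 0"
  hence "proj' k x \<noteq> 0 \<or> proj' k y \<noteq> 0" by auto
  thus "int k \<le> N" using assms unfolding Vle_iff by blast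
qed
lemma Vle_scale: "x \<in> Vle' N \<Longrightarrow> sc c x \<in> Vle' N"
  unfolding Vle_iff proj_scale by fastforce
lemma Vle_neg: "x \<in> Vle' N \<Longrightarrow> - x \<in> Vle' N"
  using Vle_scale[of x N "-1"] by (metis V.scale_minus_left V.scale_one)
lemma Vle_diff: "x \<in> Vle' N \<Longrightarrow> y \<in> Vle' N \<Longrightarrow> x - y \<in> Vle' N"
  by (metis Vle_add Vle_neg diff_conv_add_uminus)
lemma Vle_sum: "(\<And>i. i \<in> A \<Longrightarrow> f i \<in> Vle' N) \<Longrightarrow> sum f A \<in> Vle' N"
  by (induct A rule: infinite_finite_induct) (auto simp: Vle_add)
lemma Vle_mono: "x \<in> Vle' N \<Longrightarrow> N \<le> M \<Longrightarrow> x \<in> Vle' M"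
  unfolding Vle_iff by force
lemma hom_Vle: assumes "hom k v" shows "v \<in> Vle' (int k)"
  unfolding Vle_iff using proj_hom[OF assms] by auto
lemma Vle_negative: "x \<in> Vle' N \<Longrightarrow> N < 0 \<Longrightarrow> x = 0"
proof -
  assume a: "x \<in> Vle' N" "N < 0"
  hence "\<forall>k. proj' k x = 0" unfolding Vle_iff by force
  thus "x = 0" using proj_sum_eq[of "{}" x] by simp
qed
lemma Vle_decomp: "x \<in> Vle' (int N) \<Longrightarrow> x = (\<Sum>k\<le>N. proj' k x)"
  by (rule proj_sum_eq) (auto simp: Vle_iff)

lemma eig_Vle:
  assumes "L 0 v = sc (of_int z) v"
  shows "v \<in> Vle' z"
proof (cases "z < 0")
  case True
  have "\<forall>k. (of_int z :: complex) \<noteq> of_nat k"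
  proof (intro allI notI)
    fix k assume "(of_int z :: complex) = of_nat k"
    hence "(of_int z :: complex) = of_int (int k)" by simp
    hence "z = int k" by (simp only: of_int_eq_iff)
    thus False using True by simp
  qed
  thus ?thesis using eig_zero[OF assms] by simp
next
  case False
  hence "hom (nat z) v" using assms unfolding hom_def by simp
  thus ?thesis using hom_Vle False by fastforce
qed

end

context svoa begin

lemma sum_le_collapse1:
  fixes f :: "nat \<Rightarrow> 'v"
  assumes "\<forall>i\<ge>1. f i = 0"
  shows "(\<Sum>i\<le>N. f i) = f 0"
proof -
  have "(\<Sum>i\<le>N. f i) = (\<Sum>i\<in>{0}. f i)"
    by (rule sum.mono_neutral_right) (use assms in auto)
  thus ?thesis by simp
qed

lemma sum_le_collapse2:
  fixes f :: "nat \<Rightarrow> 'v"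
  assumes "\<forall>i\<ge>2. f i = 0" "N \<ge> 1"
  shows "(\<Sum>i\<le>N. f i) = f 0 + f 1"
proof -
  have "(\<Sum>i\<le>N. f i) = (\<Sum>i\<in>{0,1}. f i)"
    by (rule sum.mono_neutral_right) (use assms in auto)
  thus ?thesis by simp
qed

lemma comm_sum: "\<exists>N0. \<forall>N\<ge>N0.
  (\<Sum>i\<le>N. sc (of_int m gchoose i) (md (md a (int i) b) (m + n - int i) c))
  = md a m (md b n c) - md b n (md a m c)"
proof -
  obtain N0 where N0: "\<forall>N\<ge>N0.
        (\<Sum>i\<le>N. sc ((of_int m) gchoose i) (md (md a (0 + int i) b) (m + n - int i) c)) =
        (\<Sum>i\<le>N. sc ((-1)^i * ((of_int 0) gchoose i))
            (md a (m + 0 - int i) (md b (n + int i) c)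
             - sc ((-1) powi 0) (md b (n + 0 - int i) (md a (m + int i) c))))"
    using borch[where m=m and k=0 and a=a and b=b and n=n and c=c] by blast
  have "(\<Sum>i\<le>N. sc ((-1)^i * ((of_int 0) gchoose i))
            (md a (m + 0 - int i) (md b (n + int i) c)
             - sc ((-1) powi 0) (md b (n + 0 - int i) (md a (m + int i) c))))
        = md a m (md b n c) - md b n (md a m c)" for N
    by (subst sum_le_collapse1) (auto simp: gbinomial_0_left)
  thus ?thesis using N0 by auto
qed

lemma comm1:
  assumes "\<forall>i\<ge>2. (of_int m gchoose i :: complex) = 0 \<or> md a (int i) b = 0"
  shows "md a m (md b n c) - md b n (md a m c)
     = md (md a 0 b) (m + n) c + sc (of_int m) (md (md a 1 b) (m + n - 1) c)"
proof -
  obtain N0 where N0: "\<forall>N\<ge>N0.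
  (\<Sum>i\<le>N. sc (of_int m gchoose i) (md (md a (int i) b) (m + n - int i) c))
  = md a m (md b n c) - md b n (md a m c)" using comm_sum by blast
  have "md a m (md b n c) - md b n (md a m c) =
    (\<Sum>i\<le>max N0 1. sc (of_int m gchoose i) (md (md a (int i) b) (m + n - int i) c))"
    using N0 by simp
  also have "\<dots> = md (md a 0 b) (m + n) c + sc (of_int m) (md (md a 1 b) (m + n - 1) c)"
    by (subst sum_le_collapse2) (use assms in auto)
  finally show ?thesis .
qed

lemma L_md: "L n = md cv (n + 1)" unfolding Vir_def by (rule refl)

lemma gch1: "i \<ge> 2 \<Longrightarrow> ((of_int 1::complex) gchoose i) = 0"
proof -
  assume "i \<ge> 2"
  have "(of_nat 1::complex) gchoose i = of_nat (1 choose i)" by (rule binomial_gbinomial[symmetric])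
  also have "(1 choose i) = 0" using \<open>i \<ge> 2\<close> by (simp add: binomial_eq_0)
  finally show ?thesis by simp
qed

lemma comm_L0_gen: "L 0 (md x n c) - md x n (L 0 c) = md (L 0 x) n c - sc (of_int n + 1) (md x n c)"
proof -
  have "md cv 1 (md x n c) - md x n (md cv 1 c) = md (md cv 0 x) (1 + n) c + sc (of_int 1) (md (md cv 1 x) (1 + n - 1) c)"
    by (rule comm1) (use gch1 in simp)
  hence "L 0 (md x n c) - md x n (L 0 c) = md (md cv 0 x) (1 + n) c + sc (of_int 1) (md (md cv 1 x) (1 + n - 1) c)"
    by (simp add: L_md)
  also have "md cv 0 x = L (-1) x" by (simp add: L_md)
  also have "md cv 1 x = L 0 x" by (simp add: L_md)
  also have "md (L (-1) x) (1 + n) c = sc (- of_int (1 + n)) (md x n c)" by (simp add: transl)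
  finally show ?thesis by (simp add: algebra_simps V.scale_left_distrib V.scale_minus_left)
qed

definition ccv :: complex where "ccv = (SOME cc. \<forall>m n v.
        L m (L n v) - L n (L m v) =
        sc (of_int (m - n)) (L (m + n) v)
        + (if m + n = 0 then sc (cc / 12 * (of_int m ^ 3 - of_int m)) v else 0))"

lemma vir: "L m (L n v) - L n (L m v) =
        sc (of_int (m - n)) (L (m + n) v)
        + (if m + n = 0 then sc (ccv / 12 * (of_int m ^ 3 - of_int m)) v else 0)"
proof -
  have "\<forall>m n v.
        L m (L n v) - L n (L m v) =
        sc (of_int (m - n)) (L (m + n) v)
        + (if m + n = 0 then sc (ccv / 12 * (of_int m ^ 3 - of_int m)) v else 0)"
    unfolding ccv_def using virasoro by (rule someI_ex)
  thus ?thesis by blast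
qed

lemma cv_hom: "hom 2 cv"
proof -
  have "L 0 (L (-2) vac) - L (-2) (L 0 vac) = sc 2 (L (-2) vac)"
    using vir[of 0 "-2" vac] by simp
  moreover have "L 0 (L (-2) vac) - L (-2) (L 0 vac) = md (L 0 cv) (-1) vac"
    using comm_L0_gen[of cv "-1" vac] by (simp add: L_md)
  ultimately have "md (L 0 cv) (-1) vac = sc 2 (L (-2) vac)"
    by simp
  moreover have "L (-2) vac = cv" using md_vac by (simp add: L_md)
  ultimately have "L 0 cv = sc 2 cv" using md_vac by simp
  thus ?thesis unfolding hom_def by simp
qed

end

context svoa begin

lemma mode_hom_eig:
  assumes "hom dx x" "hom e c"
  shows "L 0 (md x n c) = sc (of_int (int e + int dx - n - 1)) (md x n c)"
proof -
  have "L 0 (md x n c) = md x n (L 0 c) + (md (L 0 x) n c - sc (of_int n + 1) (md x n c))"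
    using comm_L0_gen[of x n c] by (simp add: algebra_simps)
  also have "\<dots> = sc (of_nat e) (md x n c) + (sc (of_nat dx) (md x n c) - sc (of_int n + 1) (md x n c))"
    using assms unfolding hom_def by (simp add: md_scale md_scale1)
  also have "\<dots> = sc (of_nat e + of_nat dx - (of_int n + 1)) (md x n c)"
    by (simp add: V.scale_left_distrib V.scale_left_diff_distrib)
  finally show ?thesis by simp
qed

lemma mode_Vle:
  assumes "hom dx x" "c \<in> Vle' M"
  shows "md x n c \<in> Vle' (M + int dx - n - 1)"
proof (cases "M < 0")
  case True thus ?thesis using Vle_negative[OF assms(2)] by simp
next
  case False
  then obtain N where N: "M = int N" by (metis nonneg_int_cases not_less)
  have "c = (\<Sum>k\<le>N. proj' k c)" using Vle_decomp assms(2) N by blast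
  hence "md x n c = (\<Sum>k\<le>N. md x n (proj' k c))" by (metis md_sum)
  also have "\<dots> \<in> Vle' (M + int dx - n - 1)"
  proof (rule Vle_sum)
    fix k assume "k \<in> {..N}"
    hence k: "int k \<le> M" using N by simp
    have "md x n (proj' k c) \<in> Vle' (int k + int dx - n - 1)"
      by (rule eig_Vle) (rule mode_hom_eig[OF assms(1) hom_proj])
    thus "md x n (proj' k c) \<in> Vle' (M + int dx - n - 1)"
      by (rule Vle_mono) (use k in simp)
  qed
  finally show ?thesis .
qed

lemma L_Vle: "c \<in> Vle' M \<Longrightarrow> L m c \<in> Vle' (M - m)"
  using mode_Vle[OF cv_hom, of c M "m + 1"] by (simp add: L_md)

lemma pmode_hom:
  assumes "hom k x"
  shows "pmode sc md cv x n c = md x (n + int k - 1) c"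
proof (cases "x = 0")
  case True thus ?thesis unfolding pmode_def by simp
next
  case False
  have "{j. proj' j x \<noteq> 0} = {k}" using proj_hom[OF assms] False by auto
  thus ?thesis unfolding pmode_def using proj_hom[OF assms] by simp
qed

lemma pmode_cv: "pmode sc md cv cv n c = L n c"
  using pmode_hom[OF cv_hom] by (simp add: L_md add.commute)

lemma ip_add2: "ip z (x + y) = ip z x + ip z y"
proof -
  have "ip z (x + y) = cnj (ip (x + y) z)" by (rule ip_cnj)
  also have "\<dots> = cnj (ip x z) + cnj (ip y z)" by (simp add: ip_add1)
  finally show ?thesis by (simp add: ip_cnj[of z x] ip_cnj[of z y])
qed
lemma ip_scale2: "ip x (sc c y) = cnj c * ip x y"
proof -
  have "ip x (sc c y) = cnj (ip (sc c y) x)" by (rule ip_cnj)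
  also have "\<dots> = cnj c * cnj (ip y x)" by (simp add: ip_scale1)
  finally show ?thesis by (simp add: ip_cnj[of x y])
qed
lemma ip_zero1[simp]: "ip 0 y = 0" using ip_scale1[of 0 0 y] by simp
lemma ip_zero2[simp]: "ip y 0 = 0" using ip_scale2[of y 0 0] by simp
lemma ip_diff1: "ip (x - y) z = ip x z - ip y z"
  by (metis add_diff_cancel diff_add_cancel ip_add1)
lemma ip_diff2: "ip z (x - y) = ip z x - ip z y"
  by (metis add_diff_cancel diff_add_cancel ip_add2)
lemma ip_sum1: "ip (sum f A) y = (\<Sum>i\<in>A. ip (f i) y)"
  by (induct A rule: infinite_finite_induct) (auto simp: ip_add1)
lemma ip_sum2: "ip y (sum f A) = (\<Sum>i\<in>A. ip y (f i))"
  by (induct A rule: infinite_finite_induct) (auto simp: ip_add2)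

definition vn :: "'v \<Rightarrow> real" where "vn x = vnorm ip x"

lemma ip_self_real: "ip x x = complex_of_real (Re (ip x x))"
  using ip_pos[of x] by (simp add: complex_is_Real_iff)
lemma ip_self_ge0: "Re (ip x x) \<ge> 0" using ip_pos by blast
lemma vn_ge0: "vn x \<ge> 0" unfolding vn_def vnorm_def using ip_self_ge0[of x] by simp
lemma vn_sq: "vn x ^ 2 = Re (ip x x)" unfolding vn_def vnorm_def using ip_self_ge0[of x] by simp
lemma ip_self_vn: "ip x x = complex_of_real (vn x ^ 2)" using ip_self_real vn_sq by simp
lemma vn_zero_iff: "vn x = 0 \<longleftrightarrow> x = 0"
proof
  assume "vn x = 0" hence "ip x x = 0" using ip_self_vn[of x] by simp
  thus "x = 0" using ip_pos by blast
qed (simp add: vn_def vnorm_def)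
lemma vn_zero[simp]: "vn 0 = 0" using vn_zero_iff by simp

lemma ip_expand: "ip (x - sc t y) (x - sc t y) = ip x x - cnj t * ip x y - t * ip y x + t * cnj t * ip y y"
  by (simp add: ip_diff1 ip_diff2 ip_scale1 ip_scale2 algebra_simps)

lemma cauchy_schwarz: "cmod (ip x y) \<le> vn x * vn y"
proof (cases "y = 0")
  case True thus ?thesis by simp
next
  case False
  define q where "q = vn y ^ 2"
  have qpos: "q > 0" using False vn_zero_iff vn_ge0 unfolding q_def by (metis zero_less_power2)
  define p where "p = ip x y"
  define t where "t = p / complex_of_real q"
  have yy: "ip y y = complex_of_real q" unfolding q_def by (rule ip_self_vn)
  have yx: "ip y x = cnj p" unfolding p_def by (rule ip_cnj)
  have "ip (x - sc t y) (x - sc t y) = ip x x - cnj t * p - t * cnj p + t * cnj t * complex_of_real q"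
    using ip_expand[of x t y] yy yx p_def by simp
  also have "\<dots> = ip x x - complex_of_real (cmod p ^ 2 / q)"
  proof -
    have pp: "p * cnj p = complex_of_real (cmod p ^ 2)" using complex_norm_square[of p] by simp
    have qn: "complex_of_real q \<noteq> 0" using qpos by simp
    have "cnj t * p = complex_of_real (cmod p ^ 2 / q)" unfolding t_def using pp by (simp add: mult.commute)
    moreover have "t * cnj p = complex_of_real (cmod p ^ 2 / q)" unfolding t_def using pp by simp
    moreover have "t * cnj t * complex_of_real q = complex_of_real (cmod p ^ 2 / q)"
      unfolding t_def using pp qn by (simp add: field_simps)
    ultimately show ?thesis by simp
  qed
  finally have "0 \<le> Re (ip x x) - cmod p ^ 2 / q" using ip_self_ge0[of "x - sc t y"] by simp
  hence "cmod p ^ 2 \<le> vn x ^ 2 * q" using qpos vn_sq[of x] by (simp add: field_simps)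
  hence "cmod p ^ 2 \<le> (vn x * vn y) ^ 2" unfolding q_def by (simp add: power_mult_distrib)
  thus ?thesis unfolding p_def using vn_ge0 by (meson mult_nonneg_nonneg power2_le_imp_le)
qed

lemma vn_scale: "vn (sc c x) = cmod c * vn x"
proof -
  have "ip (sc c x) (sc c x) = c * cnj c * ip x x" by (simp add: ip_scale1 ip_scale2 mult.assoc)
  also have "\<dots> = complex_of_real (cmod c ^ 2) * complex_of_real (vn x ^ 2)"
    using ip_self_vn[of x] complex_norm_square[of c] by simp
  also have "\<dots> = complex_of_real ((cmod c * vn x) ^ 2)" by (simp add: power_mult_distrib)
  finally have "vn (sc c x) ^ 2 = (cmod c * vn x) ^ 2" using vn_sq[of "sc c x"] by simp
  thus ?thesis using vn_ge0 by (metis norm_ge_zero mult_nonneg_nonneg power2_eq_iff_nonneg)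
qed

lemma vn_add: "vn (x + y) \<le> vn x + vn y"
proof -
  have "vn (x + y) ^ 2 = Re (ip x x + ip x y + ip y x + ip y y)"
    using vn_sq[of "x+y"] by (simp add: ip_add1 ip_add2 add.assoc)
  also have "\<dots> = vn x ^ 2 + vn y ^ 2 + 2 * Re (ip x y)"
    using vn_sq[of x] vn_sq[of y] ip_cnj[of x y] by simp
  also have "\<dots> \<le> vn x ^ 2 + vn y ^ 2 + 2 * (vn x * vn y)"
    using cauchy_schwarz[of x y] abs_Re_le_cmod[of "ip x y"] by linarith
  also have "\<dots> = (vn x + vn y) ^ 2" by (simp add: power2_eq_square algebra_simps)
  finally show ?thesis using vn_ge0 by (meson add_nonneg_nonneg power2_le_imp_le)
qed

lemma vn_neg: "vn (- x) = vn x"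
  using vn_scale[of "-1" x] by (simp add: V.scale_minus_left)
lemma vn_diff: "vn (x - y) \<le> vn x + vn y"
  using vn_add[of x "- y"] vn_neg[of y] by simp
lemma vn_sum: "vn (sum f A) \<le> (\<Sum>i\<in>A. vn (f i))"
proof (induct A rule: infinite_finite_induct)
  case (insert a A)
  thus ?case using vn_add[of "f a" "sum f A"] by simp
qed simp_all

end

context svoa begin

lemma L_adj: "ip x (L m y) = ip (L (- m) x) y"
  using invar[of x cv m y] by (simp add: star_cv pmode_cv)

lemma orth:
  assumes "hom j x" "hom k y" "j \<noteq> k"
  shows "ip x y = 0"
proof -
  have "ip x (L 0 y) = ip (L 0 x) y" using L_adj[of x 0 y] by simp
  hence "of_nat k * ip x y = of_nat j * ip x y"
    using assms unfolding hom_def by (simp add: ip_scale1 ip_scale2)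
  hence "(of_nat k - of_nat j) * ip x y = 0" by (simp add: algebra_simps)
  moreover have "(of_nat k - of_nat j :: complex) \<noteq> 0" using assms(3) by simp
  ultimately show ?thesis by simp
qed

lemma proj_proj: "proj' k (proj' j x) = (if k = j then proj' j x else 0)"
  using proj_hom[OF hom_proj] by simp

lemma ip_proj_left: "ip (proj' j x) y = ip (proj' j x) (proj' j y)"
proof -
  define S where "S = insert j {k. proj' k y \<noteq> 0}"
  have f: "finite S" unfolding S_def using proj_finite by simp
  have "y = (\<Sum>k\<in>S. proj' k y)" by (rule proj_sum_eq) (use f in \<open>auto simp: S_def\<close>)
  hence "ip (proj' j x) y = (\<Sum>k\<in>S. ip (proj' j x) (proj' k y))"
    by (metis ip_sum2)
  also have "\<dots> = (\<Sum>k\<in>{j}. ip (proj' j x) (proj' k y))"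
    by (rule sum.mono_neutral_right) (use f orth[OF hom_proj hom_proj] in \<open>auto simp: S_def\<close>)
  finally show ?thesis by simp
qed

lemma ip_decomp:
  assumes "finite T" "\<forall>k. k \<notin> T \<longrightarrow> proj' k x = 0"
  shows "ip x y = (\<Sum>k\<in>T. ip (proj' k x) (proj' k y))"
proof -
  have "x = (\<Sum>k\<in>T. proj' k x)" by (rule proj_sum_eq) (use assms in auto)
  hence "ip x y = (\<Sum>k\<in>T. ip (proj' k x) y)" by (metis ip_sum1)
  thus ?thesis using ip_proj_left by simp
qed

lemma vn_sq_decomp:
  assumes "x \<in> Vle' (int N)"
  shows "vn x ^ 2 = (\<Sum>k\<le>N. vn (proj' k x) ^ 2)"
proof -
  have "ip x x = (\<Sum>k\<le>N. ip (proj' k x) (proj' k x))"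
    by (rule ip_decomp) (use assms in \<open>auto simp: Vle_iff\<close>)
  hence "Re (ip x x) = (\<Sum>k\<le>N. Re (ip (proj' k x) (proj' k x)))" by simp
  thus ?thesis using vn_sq by simp
qed

lemma proj_L0: "proj' k (L 0 x) = sc (of_nat k) (proj' k x)"
proof -
  define S where "S = insert k {j. proj' j x \<noteq> 0}"
  have f: "finite S" unfolding S_def using proj_finite by simp
  have "x = (\<Sum>j\<in>S. proj' j x)" by (rule proj_sum_eq) (use f in \<open>auto simp: S_def\<close>)
  hence "L 0 x = (\<Sum>j\<in>S. sc (of_nat j) (proj' j x))"
    using hom_proj unfolding hom_def by (metis (no_types, lifting) L_sum sum.cong)
  hence "proj' k (L 0 x) = (\<Sum>j\<in>S. sc (of_nat j) (proj' k (proj' j x)))"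
    by (simp add: proj_sum proj_scale)
  also have "\<dots> = (\<Sum>j\<in>S. if j = k then sc (of_nat k) (proj' k x) else 0)"
    by (rule sum.cong) (auto simp: proj_proj)
  also have "\<dots> = sc (of_nat k) (proj' k x)" using f by (simp add: S_def)
  finally show ?thesis .
qed

lemma L0_expect:
  assumes "x \<in> Vle' (int N)"
  shows "Re (ip x (L 0 x)) \<le> real N * vn x ^ 2"
proof -
  have "ip x (L 0 x) = (\<Sum>k\<le>N. ip (proj' k x) (proj' k (L 0 x)))"
    by (rule ip_decomp) (use assms in \<open>auto simp: Vle_iff\<close>)
  also have "\<dots> = (\<Sum>k\<le>N. complex_of_real (real k * vn (proj' k x) ^ 2))"
    by (rule sum.cong) (auto simp: proj_L0 ip_scale2 ip_self_vn)
  finally have "Re (ip x (L 0 x)) = (\<Sum>k\<le>N. real k * vn (proj' k x) ^ 2)" by simp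
  also have "\<dots> \<le> (\<Sum>k\<le>N. real N * vn (proj' k x) ^ 2)"
    by (rule sum_mono) (auto intro: mult_right_mono)
  also have "\<dots> = real N * vn x ^ 2" using vn_sq_decomp[OF assms] by (simp add: sum_distrib_left)
  finally show ?thesis .
qed

lemma opnorm_le:
  assumes "K \<ge> 0" "\<forall>x \<in> Vle' n. vn (R x) \<le> K * vn x"
  shows "opnorm sc md cv ip n R \<le> ereal K"
  unfolding opnorm_def
proof (rule Sup_least)
  fix y assume "y \<in> {ereal (vnorm ip (R b)) |b. b \<in> Vle' n \<and> vnorm ip b \<le> 1}"
  then obtain b where b: "y = ereal (vn (R b))" "b \<in> Vle' n" "vn b \<le> 1" unfolding vn_def by auto
  have "vn (R b) \<le> K * vn b" using assms b by blast
  also have "\<dots> \<le> K" using b(3) assms(1) by (simp add: mult_left_le)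
  finally show "y \<le> ereal K" using b by simp
qed

lemma opnorm_ge0:
  assumes "R 0 = 0"
  shows "opnorm sc md cv ip n R \<ge> 0"
  unfolding opnorm_def
proof (rule Sup_upper2)
  show "ereal (vnorm ip (R 0)) \<in> {ereal (vnorm ip (R b)) |b. b \<in> Vle' n \<and> vnorm ip b \<le> 1}"
    using vn_zero unfolding vn_def by auto
  show "0 \<le> ereal (vnorm ip (R 0))" using assms vn_zero unfolding vn_def by simp
qed

lemma opnorm_bound:
  assumes lin: "\<And>c x. R (sc c x) = sc c (R x)"
    and le: "opnorm sc md cv ip n R \<le> ereal A"
    and x: "x \<in> Vle' n"
  shows "vn (R x) \<le> A * vn x"
proof -
  have R0: "R 0 = 0" using lin[of 0 0] by simp
  have "0 \<le> ereal A" using opnorm_ge0[where R=R and n=n, OF R0] le by (rule order_trans)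
  hence A0: "A \<ge> 0" by simp
  show ?thesis
  proof (cases "x = 0")
    case True thus ?thesis using R0 by simp
  next
    case False
    hence vp: "vn x > 0" using vn_zero_iff vn_ge0 by (metis less_eq_real_def)
    define y where "y = sc (complex_of_real (1 / vn x)) x"
    have vy: "vn y = 1" unfolding y_def vn_scale using vp by (simp add: norm_divide)
    have yv: "y \<in> Vle' n" unfolding y_def using x by (rule Vle_scale)
    have "ereal (vn (R y)) \<le> opnorm sc md cv ip n R"
      unfolding opnorm_def
      by (rule Sup_upper) (use vy yv in \<open>auto simp: vn_def\<close>)
    hence "ereal (vn (R y)) \<le> ereal A" using le by (rule order_trans)
    hence "vn (R y) \<le> A" by simp
    moreover have "vn (R y) = vn (R x) / vn x" unfolding y_def lin vn_scale using vp by (simp add: norm_divide)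
    ultimately show ?thesis using vp by (simp add: divide_le_eq mult.commute)
  qed
qed

end

context svoa begin

lemma kappa_bound:
  fixes m :: int
  shows "cmod (ccv / 12 * (of_int m ^ 3 - of_int m)) \<le> cmod ccv * \<bar>real_of_int m\<bar> ^ 3"
proof -
  have "cmod (ccv / 12 * (of_int m ^ 3 - of_int m)) = cmod ccv / 12 * \<bar>real_of_int m ^ 3 - real_of_int m\<bar>"
  proof -
    have "(of_int m ^ 3 - of_int m :: complex) = complex_of_real (real_of_int m ^ 3 - real_of_int m)" by simp
    thus ?thesis by (simp add: norm_mult norm_divide del: of_real_diff of_real_power)
  qed
  also have "\<bar>real_of_int m ^ 3 - real_of_int m\<bar> \<le> 12 * \<bar>real_of_int m\<bar> ^ 3"
  proof (cases "m = 0")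
    case False
    hence "1 \<le> \<bar>m\<bar>" by arith
    hence "1 \<le> \<bar>real_of_int m\<bar>" by (metis of_int_1_le_iff of_int_abs)
    hence "\<bar>real_of_int m\<bar> ^ 1 \<le> \<bar>real_of_int m\<bar> ^ 3" by (intro power_increasing) simp_all
    hence "\<bar>real_of_int m\<bar> \<le> \<bar>real_of_int m\<bar> ^ 3" by simp
    moreover have "\<bar>real_of_int m ^ 3 - real_of_int m\<bar> \<le> \<bar>real_of_int m\<bar> ^ 3 + \<bar>real_of_int m\<bar>"
      by (metis abs_triangle_ineq4 power_abs)
    ultimately show ?thesis by simp
  qed simp
  hence "cmod ccv / 12 * \<bar>real_of_int m ^ 3 - real_of_int m\<bar> \<le> cmod ccv / 12 * (12 * \<bar>real_of_int m\<bar> ^ 3)"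
    by (rule mult_left_mono) simp
  finally show ?thesis by simp
qed

lemma Lsq_rel:
  fixes m :: int
  assumes "m \<ge> 0"
  shows "vn (L (- m) u) ^ 2 \<le> vn (L m u) ^ 2 + 2 * real_of_int m * Re (ip u (L 0 u)) + cmod ccv * \<bar>real_of_int m\<bar> ^ 3 * vn u ^ 2"
proof -
  define k where "k = ccv / 12 * (of_int m ^ 3 - of_int m)"
  have "vn (L (- m) u) ^ 2 = Re (ip (L (- m) u) (L (- m) u))" by (rule vn_sq)
  also have "ip (L (- m) u) (L (- m) u) = ip u (L m (L (- m) u))" using L_adj[of u m "L (- m) u"] by simp
  also have "L m (L (- m) u) = L (- m) (L m u) + sc (of_int (2 * m)) (L 0 u) + sc k u"
    using vir[of m "- m" u] unfolding k_def by (simp add: algebra_simps)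
  also have "ip u \<dots> = ip u (L (- m) (L m u)) + cnj (of_int (2 * m)) * ip u (L 0 u) + cnj k * ip u u"
    by (simp add: ip_add2 ip_scale2)
  also have "ip u (L (- m) (L m u)) = ip (L m u) (L m u)" using L_adj[of u "- m" "L m u"] by simp
  finally have "vn (L (- m) u) ^ 2 = vn (L m u) ^ 2 + 2 * real_of_int m * Re (ip u (L 0 u)) + Re (cnj k * ip u u)"
    using vn_sq[of "L m u"] by simp
  also have "Re (cnj k * ip u u) \<le> cmod ccv * \<bar>real_of_int m\<bar> ^ 3 * vn u ^ 2"
  proof -
    have "Re (cnj k * ip u u) = Re (cnj k) * vn u ^ 2" using ip_self_vn[of u] by simp
    also have "\<dots> \<le> cmod k * vn u ^ 2" by (rule mult_right_mono) (auto intro: complex_Re_le_cmod)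
    also have "\<dots> \<le> cmod ccv * \<bar>real_of_int m\<bar> ^ 3 * vn u ^ 2"
    proof (rule mult_right_mono)
      show "cmod k \<le> cmod ccv * \<bar>real_of_int m\<bar> ^ 3" unfolding k_def by (rule kappa_bound)
    qed simp
    finally show ?thesis .
  qed
  finally show ?thesis by simp
qed

definition X :: "int \<Rightarrow> nat \<Rightarrow> real" where
  "X m N = 2 * real_of_int m * real N + cmod ccv * real_of_int m ^ 3"

lemma X_mono: "m \<ge> 0 \<Longrightarrow> N' \<le> N \<Longrightarrow> X m N' \<le> X m N"
  unfolding X_def by (simp add: mult_left_mono)
lemma X_ge0: "m \<ge> 0 \<Longrightarrow> X m N \<ge> 0"
  unfolding X_def by simp

lemma Lpos_bound:
  fixes m :: int
  assumes "m > 0"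
  shows "w \<in> Vle' (int N) \<Longrightarrow> vn (L m w) ^ 2 \<le> (real N + 1) * X m N * vn w ^ 2"
proof (induction N arbitrary: w rule: less_induct)
  case (less N)
  define u where "u = L m w"
  have uV: "u \<in> Vle' (int N - m)" unfolding u_def by (rule L_Vle[OF less.prems])
  have Xg: "X m N \<ge> 0" using X_ge0 assms by simp
  show ?case
  proof (cases "int N < m")
    case True
    hence "u = 0" using Vle_negative[OF uV] by simp
    thus ?thesis using Xg unfolding u_def by simp
  next
    case False
    define N' where "N' = nat (int N - m)"
    have N'1: "int N' = int N - m" using False unfolding N'_def by simp
    have N'2: "N' < N" using assms N'1 by simp
    have uV': "u \<in> Vle' (int N')" using uV N'1 by simp
    have IH: "vn (L m u) ^ 2 \<le> (real N' + 1) * X m N' * vn u ^ 2" using less.IH[OF N'2 uV'] .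
    have e: "Re (ip u (L 0 u)) \<le> real N' * vn u ^ 2" by (rule L0_expect[OF uV'])
    define G where "G = (real N' + 1) * X m N + X m N"
    have "vn (L (- m) u) ^ 2 \<le> vn (L m u) ^ 2 + 2 * real_of_int m * Re (ip u (L 0 u)) + cmod ccv * \<bar>real_of_int m\<bar> ^ 3 * vn u ^ 2"
      using Lsq_rel assms by simp
    also have "\<dots> \<le> (real N' + 1) * X m N' * vn u ^ 2 + 2 * real_of_int m * (real N' * vn u ^ 2) + cmod ccv * \<bar>real_of_int m\<bar> ^ 3 * vn u ^ 2"
      using IH e assms by (intro add_mono mult_left_mono) auto
    also have "\<dots> = ((real N' + 1) * X m N' + X m N') * vn u ^ 2"
      using assms unfolding X_def by (simp add: algebra_simps)
    also have "\<dots> \<le> G * vn u ^ 2"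
      unfolding G_def using X_mono[of m N' N] N'2 assms
      by (intro mult_right_mono add_mono mult_left_mono) auto
    finally have Lm: "vn (L (- m) u) ^ 2 \<le> G * vn u ^ 2" .
    have G0: "G \<ge> 0" unfolding G_def using Xg by simp
    have "vn u ^ 2 = Re (ip u u)" by (rule vn_sq)
    also have "ip u u = ip w (L (- m) u)" unfolding u_def using L_adj[of w "- m" "L m w"] by simp
    also have "Re \<dots> \<le> cmod \<dots>" by (rule complex_Re_le_cmod)
    also have "\<dots> \<le> vn w * vn (L (- m) u)" by (rule cauchy_schwarz)
    finally have cs: "vn u ^ 2 \<le> vn w * vn (L (- m) u)" .
    have "vn u ^ 2 \<le> G * vn w ^ 2"
    proof (cases "vn u = 0")
      case True thus ?thesis using G0 by simp
    next
      case False
      hence up: "vn u > 0" using vn_ge0 by (metis less_eq_real_def)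
      have "(vn u ^ 2) ^ 2 \<le> (vn w * vn (L (- m) u)) ^ 2"
        using cs up by (intro power_mono) auto
      also have "\<dots> = vn w ^ 2 * vn (L (- m) u) ^ 2" by (simp add: power_mult_distrib)
      also have "\<dots> \<le> vn w ^ 2 * (G * vn u ^ 2)" using Lm by (intro mult_left_mono) auto
      finally have "vn u ^ 2 * vn u ^ 2 \<le> (G * vn w ^ 2) * vn u ^ 2"
        by (simp add: power2_eq_square algebra_simps)
      thus ?thesis by (rule mult_right_le_imp_le) (use up in simp)
    qed
    also have "\<dots> \<le> (real N + 1) * X m N * vn w ^ 2"
    proof -
      have "real N' + 2 \<le> real N + 1" using N'2 by simp
      hence "G \<le> (real N + 1) * X m N" unfolding G_def using Xg
        by (metis (no_types) add.commute distrib_left mult.commute mult.right_neutral mult_right_mono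
            one_add_one add.left_commute is_num_normalize(1))
      thus ?thesis by (intro mult_right_mono) auto
    qed
    finally show ?thesis unfolding u_def .
  qed
qed

end

context svoa begin

lemma X_mono_m: "0 \<le> m \<Longrightarrow> m \<le> J \<Longrightarrow> X m N \<le> X J N"
  unfolding X_def
  by (intro add_mono mult_right_mono mult_left_mono power_mono) auto

definition Lam :: "nat \<Rightarrow> int \<Rightarrow> real" where "Lam N J = (real N + 2) * X J N + 1"

lemma Lam_ge1: "J \<ge> 0 \<Longrightarrow> Lam N J \<ge> 1"
  unfolding Lam_def using X_ge0[of J N] by simp

lemma L_bound_sq:
  assumes "m \<noteq> 0" "\<bar>m\<bar> \<le> J" "w \<in> Vle' (int N)"
  shows "vn (L m w) ^ 2 \<le> (real N + 2) * X J N * vn w ^ 2"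
proof (cases "m > 0")
  case True
  have "vn (L m w) ^ 2 \<le> (real N + 1) * X m N * vn w ^ 2" by (rule Lpos_bound[OF True assms(3)])
  also have "\<dots> \<le> (real N + 2) * X J N * vn w ^ 2"
  proof (rule mult_right_mono)
    show "(real N + 1) * X m N \<le> (real N + 2) * X J N"
      by (rule mult_mono) (use X_mono_m[of m J N] X_ge0[of m N] True assms(2) in auto)
  qed simp
  finally show ?thesis .
next
  case False
  define k where "k = - m"
  have k: "k > 0" "m = - k" using False assms(1) unfolding k_def by auto
  have "vn (L (- k) w) ^ 2 \<le> vn (L k w) ^ 2 + 2 * real_of_int k * Re (ip w (L 0 w)) + cmod ccv * \<bar>real_of_int k\<bar> ^ 3 * vn w ^ 2"
    using Lsq_rel[of k w] k by simp
  also have "\<dots> \<le> (real N + 1) * X k N * vn w ^ 2 + 2 * real_of_int k * (real N * vn w ^ 2) + cmod ccv * \<bar>real_of_int k\<bar> ^ 3 * vn w ^ 2"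
  proof -
    have "2 * real_of_int k * Re (ip w (L 0 w)) \<le> 2 * real_of_int k * (real N * vn w ^ 2)"
      by (rule mult_left_mono) (use L0_expect[OF assms(3)] k in auto)
    thus ?thesis using Lpos_bound[OF k(1) assms(3)] by linarith
  qed
  also have "\<dots> = (real N + 2) * X k N * vn w ^ 2" using k unfolding X_def by (simp add: algebra_simps)
  also have "\<dots> \<le> (real N + 2) * X J N * vn w ^ 2"
  proof (rule mult_right_mono)
    show "(real N + 2) * X k N \<le> (real N + 2) * X J N"
      by (rule mult_left_mono) (use X_mono_m[of k J N] k assms(2) in auto)
  qed simp
  finally show ?thesis using k by simp
qed

lemma L_bound:
  assumes "m \<noteq> 0" "\<bar>m\<bar> \<le> J" "w \<in> Vle' (int N)"
  shows "vn (L m w) \<le> Lam N J * vn w"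
proof -
  define Q where "Q = (real N + 2) * X J N"
  have Q0: "Q \<ge> 0" unfolding Q_def using X_ge0[of J N] assms by simp
  have "vn (L m w) ^ 2 \<le> Q * vn w ^ 2" unfolding Q_def by (rule L_bound_sq[OF assms])
  also have "\<dots> \<le> (Q + 1) ^ 2 * vn w ^ 2"
  proof (rule mult_right_mono)
    show "Q \<le> (Q + 1) ^ 2" using Q0 by (simp add: power2_eq_square algebra_simps)
  qed simp
  also have "\<dots> = ((Q + 1) * vn w) ^ 2" by (simp add: power_mult_distrib)
  finally have "vn (L m w) \<le> (Q + 1) * vn w"
    by (rule power2_le_imp_le) (use Q0 vn_ge0 in auto)
  thus ?thesis unfolding Lam_def Q_def .
qed

lemma comm_a:
  assumes "hom da a" "\<forall>k>0. L k a = 0"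
  shows "sc (of_int j * (of_nat da - 1)) (md a (j + int da - 1) c)
       = L j (md a (int da - 1) c) - md a (int da - 1) (L j c)"
proof -
  have cond: "\<forall>i\<ge>2. (of_int (j + 1) gchoose i :: complex) = 0 \<or> md cv (int i) a = 0"
  proof (intro allI impI disjI2)
    fix i :: nat assume "i \<ge> 2"
    hence "md cv (int i) a = L (int i - 1) a" by (simp add: L_md)
    thus "md cv (int i) a = 0" using assms(2) \<open>i \<ge> 2\<close> by simp
  qed
  have "md cv (j + 1) (md a (int da - 1) c) - md a (int da - 1) (md cv (j + 1) c)
     = md (md cv 0 a) (j + 1 + (int da - 1)) c + sc (of_int (j + 1)) (md (md cv 1 a) (j + 1 + (int da - 1) - 1) c)"
    by (rule comm1[OF cond])
  also have "md cv 0 a = L (-1) a" by (simp add: L_md)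
  also have "md cv 1 a = sc (of_nat da) a" using assms(1) unfolding hom_def by (simp add: L_md)
  also have "md (L (-1) a) (j + 1 + (int da - 1)) c = sc (- of_int (j + int da)) (md a (j + int da - 1) c)"
    by (simp add: transl algebra_simps)
  also have "md (sc (of_nat da) a) (j + 1 + (int da - 1) - 1) c = sc (of_nat da) (md a (j + int da - 1) c)"
    by (simp add: md_scale1 algebra_simps)
  finally have "L j (md a (int da - 1) c) - md a (int da - 1) (L j c)
      = sc (- of_int (j + int da)) (md a (j + int da - 1) c) + sc (of_int (j + 1)) (sc (of_nat da) (md a (j + int da - 1) c))"
    by (simp add: L_md)
  also have "\<dots> = sc (- of_int (j + int da) + of_int (j + 1) * of_nat da) (md a (j + int da - 1) c)"
    by (simp add: V.scale_left_distrib)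
  also have "- of_int (j + int da) + of_int (j + 1) * of_nat da = (of_int j * (of_nat da - 1) :: complex)"
    by (simp add: algebra_simps)
  finally show ?thesis by simp
qed

lemma int_abs_ge1: "(z::int) \<noteq> 0 \<Longrightarrow> 1 \<le> \<bar>z\<bar>" by arith

lemma a_bound:
  assumes "hom da a" "\<forall>k>0. L k a = 0" "da \<noteq> 1"
    and A: "A \<ge> 0" "\<forall>y \<in> Vle' (int NN). vn (md a (int da - 1) y) \<le> A * vn y"
    and J: "\<bar>j\<bar> \<le> J"
    and y: "y \<in> Vle' (int NN)" "L j y \<in> Vle' (int NN)"
  shows "vn (md a (j + int da - 1) y) \<le> 2 * A * Lam NN J * vn y"
proof -
  have J0: "J \<ge> 0" using J by simp
  have L1: "Lam NN J \<ge> 1" by (rule Lam_ge1[OF J0])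
  show ?thesis
  proof (cases "j = 0")
    case True
    have "vn (md a (j + int da - 1) y) \<le> A * vn y" using A y True by simp
    also have "\<dots> \<le> 2 * A * Lam NN J * vn y"
    proof -
      have "A * vn y * 1 \<le> A * vn y * (2 * Lam NN J)"
        by (rule mult_left_mono) (use L1 A vn_ge0[of y] in auto)
      thus ?thesis by (simp add: algebra_simps)
    qed
    finally show ?thesis .
  next
    case False
    define a0 where "a0 = md a (int da - 1)"
    have a0y: "a0 y \<in> Vle' (int NN)"
      using mode_Vle[OF assms(1) y(1), of "int da - 1"] unfolding a0_def by simp
    define q where "q = (of_int j * (of_nat da - 1) :: complex)"
    have q1: "cmod q \<ge> 1"
    proof -
      have "q = complex_of_real (real_of_int (j * (int da - 1)))" unfolding q_def by simp
      hence "cmod q = \<bar>real_of_int (j * (int da - 1))\<bar>" by (simp only: norm_of_real)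
      moreover have "j * (int da - 1) \<noteq> 0" using False assms(3) by simp
      moreover have "1 \<le> \<bar>j * (int da - 1)\<bar>" if "j * (int da - 1) \<noteq> 0" using that by (rule int_abs_ge1)
      ultimately have c: "cmod q = \<bar>real_of_int (j * (int da - 1))\<bar>" and z: "1 \<le> \<bar>j * (int da - 1)\<bar>" by blast+
      have "real_of_int 1 \<le> real_of_int \<bar>j * (int da - 1)\<bar>" using z by (simp only: of_int_le_iff)
      thus ?thesis unfolding c of_int_abs by simp
    qed
    have "cmod q * vn (md a (j + int da - 1) y) = vn (L j (a0 y) - a0 (L j y))"
      using comm_a[OF assms(1,2), of j y] vn_scale[of q "md a (j + int da - 1) y"] unfolding q_def a0_def by simp
    also have "\<dots> \<le> vn (L j (a0 y)) + vn (a0 (L j y))" by (rule vn_diff)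
    also have "\<dots> \<le> Lam NN J * (A * vn y) + A * (Lam NN J * vn y)"
    proof (rule add_mono)
      have "vn (L j (a0 y)) \<le> Lam NN J * vn (a0 y)" by (rule L_bound[OF False J a0y])
      also have "\<dots> \<le> Lam NN J * (A * vn y)"
        by (rule mult_left_mono) (use A y L1 in \<open>auto simp: a0_def\<close>)
      finally show "vn (L j (a0 y)) \<le> Lam NN J * (A * vn y)" .
      have "vn (a0 (L j y)) \<le> A * vn (L j y)" using A y unfolding a0_def by blast
      also have "\<dots> \<le> A * (Lam NN J * vn y)"
        by (rule mult_left_mono) (use L_bound[OF False J y(1)] A in auto)
      finally show "vn (a0 (L j y)) \<le> A * (Lam NN J * vn y)" .
    qed
    also have "\<dots> = 2 * A * Lam NN J * vn y" by (simp add: algebra_simps)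
    finally have "cmod q * vn (md a (j + int da - 1) y) \<le> 2 * A * Lam NN J * vn y" .
    moreover have "vn (md a (j + int da - 1) y) \<le> cmod q * vn (md a (j + int da - 1) y)"
    proof -
      have "1 * vn (md a (j + int da - 1) y) \<le> cmod q * vn (md a (j + int da - 1) y)"
        by (rule mult_right_mono) (use q1 vn_ge0 in auto)
      thus ?thesis by simp
    qed
    ultimately show ?thesis by linarith
  qed
qed

end

lemma gch_step:
  fixes a :: complex
  shows "(a gchoose Suc i) = (a gchoose i) * (a - of_nat i) / of_nat (Suc i)"
proof -
  have "fact (Suc i) * (a gchoose Suc i) = (\<Prod>j = 0..<Suc i. a - of_nat j)" by (rule gbinomial_mult_fact)
  also have "\<dots> = (\<Prod>j = 0..<i. a - of_nat j) * (a - of_nat i)" by simp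
  also have "(\<Prod>j = 0..<i. a - of_nat j) = fact i * (a gchoose i)" by (rule gbinomial_mult_fact[symmetric])
  finally have "fact (Suc i) * (a gchoose Suc i) = fact i * (a gchoose i) * (a - of_nat i)" .
  hence "fact i * (of_nat (Suc i) * (a gchoose Suc i)) = fact i * ((a gchoose i) * (a - of_nat i))"
    by (simp only: fact_Suc of_nat_mult mult.assoc mult.left_commute)
  hence e: "of_nat (Suc i) * (a gchoose Suc i) = (a gchoose i) * (a - of_nat i)"
    by (rule mult_left_cancel[THEN iffD1, rotated]) simp
  have "(of_nat (Suc i) :: complex) \<noteq> 0" by (simp only: of_nat_eq_0_iff)
  with e show ?thesis by (simp add: field_simps del: of_nat_Suc)
qed

lemma gch_bound:
  fixes k :: int
  shows "cmod ((of_int k :: complex) gchoose i) \<le> (real i + 1) ^ nat \<bar>k\<bar>"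
proof (induction i)
  case 0 thus ?case by simp
next
  case (Suc i)
  define K where "K = nat \<bar>k\<bar>"
  have "cmod ((of_int k :: complex) gchoose Suc i) = cmod (of_int k gchoose i) * cmod (of_int k - of_nat i) / (real i + 1)"
    unfolding gch_step by (simp add: norm_mult norm_divide del: of_nat_Suc)
  also have "cmod (of_int k - of_nat i :: complex) \<le> real K + real i"
  proof -
    have "(of_int k - of_nat i :: complex) = complex_of_real (real_of_int k - real i)" by simp
    hence "cmod (of_int k - of_nat i :: complex) = \<bar>real_of_int k - real i\<bar>" by (simp only: norm_of_real)
    also have "\<dots> \<le> real K + real i" unfolding K_def by simp
    finally show ?thesis .
  qed
  hence "cmod (of_int k gchoose i :: complex) * cmod (of_int k - of_nat i :: complex) / (real i + 1)
      \<le> (real i + 1) ^ K * (real K + real i) / (real i + 1)"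
    using Suc.IH unfolding K_def[symmetric]
    by (intro divide_right_mono mult_mono) auto
  also have "\<dots> \<le> (real i + 2) ^ K"
  proof -
    have "1 + real K * (1 / (real i + 1)) \<le> (1 + 1 / (real i + 1)) ^ K"
      by (rule Bernoulli_inequality) (smt (verit) divide_nonneg_nonneg of_nat_0_le_iff)
    moreover have "(real K + real i) / (real i + 1) \<le> 1 + real K * (1 / (real i + 1))"
      by (simp add: field_simps)
    moreover have "1 + 1 / (real i + 1) = (real i + 2) / (real i + 1)"
      by (simp add: field_simps)
    ultimately have "(real K + real i) / (real i + 1) \<le> ((real i + 2) / (real i + 1)) ^ K"
      by simp
    hence "(real i + 1) ^ K * ((real K + real i) / (real i + 1)) \<le> (real i + 1) ^ K * ((real i + 2) / (real i + 1)) ^ K"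
      by (rule mult_left_mono) simp
    also have "\<dots> = ((real i + 1) * ((real i + 2) / (real i + 1))) ^ K" by (simp only: power_mult_distrib)
    also have "(real i + 1) * ((real i + 2) / (real i + 1)) = real i + 2" by simp
    finally show ?thesis by simp
  qed
  finally show ?case unfolding K_def by (simp add: add.commute)
qed

context svoa begin

lemma iterate:
  assumes "hom d b"
  shows "\<exists>N0. \<forall>N\<ge>N0. md (md b k a) n c =
        (\<Sum>i\<le>N. sc ((-1)^i * ((of_int k) gchoose i))
            (md b (k - int i) (md a (n + int i) c)
             - sc ((-1) powi k) (md a (n + k - int i) (md b (int i) c))))"
proof -
  obtain N0 where N0: "\<forall>N\<ge>N0.
        (\<Sum>i\<le>N. sc ((of_int 0) gchoose i) (md (md b (k + int i) a) (0 + n - int i) c)) =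
        (\<Sum>i\<le>N. sc ((-1)^i * ((of_int k) gchoose i))
            (md b (0 + k - int i) (md a (n + int i) c)
             - sc ((-1) powi k) (md a (n + k - int i) (md b (0 + int i) c))))"
    using borch[where m=0 and k=k and a=b and b=a and n=n and c=c] by blast
  have "(\<Sum>i\<le>N. sc ((of_int 0) gchoose i) (md (md b (k + int i) a) (0 + n - int i) c)) = md (md b k a) n c" for N
    by (subst sum_le_collapse1) (auto simp: gbinomial_0_left)
  thus ?thesis using N0 by auto
qed

end

context svoa begin

lemma bmode_bound:
  assumes hb: "hom d b"
    and eb: "\<forall>m M. opnorm sc md cv ip M (pmode sc md cv b m)
            \<le> ereal (Cb * (1 + \<bar>real_of_int m\<bar>) powr t * (1 + \<bar>real_of_int M\<bar>) powr s)"
    and y: "y \<in> Vle' (int M)"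
  shows "vn (md b j y) \<le> Cb * (1 + \<bar>real_of_int (j - int d + 1)\<bar>) powr t * (1 + real M) powr s * vn y"
proof -
  have pm: "pmode sc md cv b (j - int d + 1) = md b j"
    using pmode_hom[OF hb] by (intro ext) simp
  have "opnorm sc md cv ip (int M) (md b j) \<le> ereal (Cb * (1 + \<bar>real_of_int (j - int d + 1)\<bar>) powr t * (1 + real M) powr s)"
    using eb[rule_format, where m="j - int d + 1" and M="int M"] unfolding pm by simp
  thus ?thesis by (rule opnorm_bound[OF md_scale _ y])
qed

lemma term_bound:
  assumes hb: "hom d b"
    and eb: "\<forall>m M. opnorm sc md cv ip M (pmode sc md cv b m)
            \<le> ereal (Cb * (1 + \<bar>real_of_int m\<bar>) powr t * (1 + \<bar>real_of_int M\<bar>) powr s)"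
    and Cb: "Cb \<ge> 0" "t \<ge> 0" "s \<ge> 0"
    and ha: "hom da a" "\<forall>k>0. L k a = 0" "da \<noteq> 1"
    and A: "A \<ge> 0" "\<forall>y \<in> Vle' (int (n0 + d)). vn (md a (int da - 1) y) \<le> A * vn y"
    and c: "c \<in> Vle' (int n0)"
    and Y: "real n0 + real d + real p + 2 \<le> Y"
    and i: "i \<le> n0 + d"
  shows "vn (sc ((-1)^i * ((of_int (int d - 1 - int p)) gchoose i))
            (md b (int d - 1 - int p - int i) (md a (int da + int p - 1 + int i) c)
             - sc ((-1) powi (int d - 1 - int p)) (md a (int da + int p - 1 + (int d - 1 - int p) - int i) (md b (int i) c))))
     \<le> Y powr (nat \<bar>int d - 1 - int p\<bar>) * (4 * A * Lam (n0 + d) (int (n0 + d + p + 1)) * Cb * Y powr t * Y powr s) * vn c"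
proof -
  define \<kappa> where "\<kappa> = int d - 1 - int p"
  define K where "K = nat \<bar>\<kappa>\<bar>"
  define NN where "NN = n0 + d"
  define J where "J = int (n0 + d + p + 1)"
  define \<Lambda> where "\<Lambda> = Lam NN J"
  have X1: "Y \<ge> 1" using Y by simp
  have L1: "\<Lambda> \<ge> 1" unfolding \<Lambda>_def J_def by (rule Lam_ge1) simp
  have cNN: "c \<in> Vle' (int NN)" using c by (rule Vle_mono) (simp add: NN_def)
  define T1 where "T1 = md b (\<kappa> - int i) (md a (int da + int p - 1 + int i) c)"
  define T2 where "T2 = md a (int da + int p - 1 + \<kappa> - int i) (md b (int i) c)"
  define y1 where "y1 = md a (int da + int p - 1 + int i) c"
  have y1eq: "y1 = md a ((int p + int i) + int da - 1) c" unfolding y1_def by (simp add: algebra_simps)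
  have y1a: "vn y1 \<le> 2 * A * \<Lambda> * vn c"
    unfolding y1eq \<Lambda>_def
  proof (rule a_bound[OF ha A[unfolded NN_def[symmetric]]])
    show "\<bar>int p + int i\<bar> \<le> J" using i unfolding J_def by simp
    show "c \<in> Vle' (int NN)" by (rule cNN)
    show "L (int p + int i) c \<in> Vle' (int NN)"
      using L_Vle[OF c, of "int p + int i"] by (rule Vle_mono) (simp add: NN_def)
  qed
  have y1V: "y1 \<in> Vle' (int n0)"
    using mode_Vle[OF ha(1) c, of "int da + int p - 1 + int i"] unfolding y1_def
    by (rule Vle_mono) simp
  have "vn T1 \<le> Cb * (1 + \<bar>real_of_int (\<kappa> - int i - int d + 1)\<bar>) powr t * (1 + real n0) powr s * vn y1"
    unfolding T1_def y1_def[symmetric] by (rule bmode_bound[OF hb eb y1V])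
  also have "\<bar>real_of_int (\<kappa> - int i - int d + 1)\<bar> = real p + real i" unfolding \<kappa>_def by simp
  also have "Cb * (1 + (real p + real i)) powr t * (1 + real n0) powr s * vn y1
      \<le> Cb * Y powr t * Y powr s * (2 * A * \<Lambda> * vn c)"
  proof -
    have "(1 + (real p + real i)) powr t \<le> Y powr t" using i Y Cb by (intro powr_mono2) auto
    moreover have "(1 + real n0) powr s \<le> Y powr s" using Y Cb by (intro powr_mono2) auto
    ultimately have "Cb * (1 + (real p + real i)) powr t * (1 + real n0) powr s \<le> Cb * Y powr t * Y powr s"
      using Cb by (simp add: mult_mono mult_left_mono)
    thus ?thesis by (rule mult_mono) (use y1a vn_ge0[of y1] Cb in auto)
  qed
  finally have T1b: "vn T1 \<le> 2 * A * \<Lambda> * Cb * Y powr t * Y powr s * vn c" by (simp add: algebra_simps)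
  define y2 where "y2 = md b (int i) c"
  have y2V: "y2 \<in> Vle' (int n0 + int d - int i - 1)"
    using mode_Vle[OF hb c, of "int i"] unfolding y2_def by simp
  have y2b: "vn y2 \<le> Cb * Y powr t * Y powr s * vn c"
  proof -
    have "vn y2 \<le> Cb * (1 + \<bar>real_of_int (int i - int d + 1)\<bar>) powr t * (1 + real n0) powr s * vn c"
      unfolding y2_def by (rule bmode_bound[OF hb eb c])
    also have "\<dots> \<le> Cb * Y powr t * Y powr s * vn c"
    proof -
      have "\<bar>real_of_int (int i - int d + 1)\<bar> \<le> real n0 + real d + 1" using i by (simp add: abs_le_iff)
      hence "(1 + \<bar>real_of_int (int i - int d + 1)\<bar>) powr t \<le> Y powr t" using Y Cb by (intro powr_mono2) auto
      moreover have "(1 + real n0) powr s \<le> Y powr s" using Y Cb by (intro powr_mono2) auto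
      ultimately have "Cb * (1 + \<bar>real_of_int (int i - int d + 1)\<bar>) powr t * (1 + real n0) powr s \<le> Cb * Y powr t * Y powr s"
        using Cb by (simp add: mult_mono mult_left_mono)
      thus ?thesis using vn_ge0[of c] by (rule mult_right_mono)
    qed
    finally show ?thesis .
  qed
  have T2eq: "T2 = md a ((int d - 1 - int i) + int da - 1) y2" unfolding T2_def y2_def \<kappa>_def by (simp add: algebra_simps)
  have T2a: "vn T2 \<le> 2 * A * \<Lambda> * vn y2"
    unfolding T2eq \<Lambda>_def
  proof (rule a_bound[OF ha A[unfolded NN_def[symmetric]]])
    show "\<bar>int d - 1 - int i\<bar> \<le> J" using i unfolding J_def by simp
    show "y2 \<in> Vle' (int NN)" using y2V by (rule Vle_mono) (simp add: NN_def)
    show "L (int d - 1 - int i) y2 \<in> Vle' (int NN)"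
      using L_Vle[OF y2V, of "int d - 1 - int i"] by (rule Vle_mono) (simp add: NN_def)
  qed
  have T2b: "vn T2 \<le> 2 * A * \<Lambda> * Cb * Y powr t * Y powr s * vn c"
  proof -
    have "2 * A * \<Lambda> * vn y2 \<le> 2 * A * \<Lambda> * (Cb * Y powr t * Y powr s * vn c)"
      by (rule mult_left_mono[OF y2b]) (use A L1 in simp)
    thus ?thesis using T2a by (simp add: algebra_simps)
  qed
  have sig: "cmod ((-1) powi \<kappa> :: complex) = 1" by (simp add: norm_power_int)
  have g: "cmod ((-1)^i * ((of_int \<kappa> :: complex) gchoose i)) \<le> Y powr K"
  proof -
    have "cmod ((-1)^i * ((of_int \<kappa> :: complex) gchoose i)) = cmod ((of_int \<kappa> :: complex) gchoose i)"
      by (simp add: norm_mult norm_power)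
    also have "\<dots> \<le> (real i + 1) ^ K" unfolding K_def by (rule gch_bound)
    also have "\<dots> \<le> Y ^ K" using i Y by (intro power_mono) auto
    also have "\<dots> = Y powr K" using X1 by (simp add: powr_realpow)
    finally show ?thesis .
  qed
  have "vn (sc ((-1)^i * ((of_int \<kappa>) gchoose i)) (T1 - sc ((-1) powi \<kappa>) T2))
      = cmod ((-1)^i * ((of_int \<kappa> :: complex) gchoose i)) * vn (T1 - sc ((-1) powi \<kappa>) T2)"
    by (rule vn_scale)
  also have "\<dots> \<le> Y powr K * (vn T1 + vn T2)"
  proof (rule mult_mono[OF g])
    show "vn (T1 - sc ((-1) powi \<kappa>) T2) \<le> vn T1 + vn T2"
      using vn_diff[of T1 "sc ((-1) powi \<kappa>) T2"] unfolding vn_scale sig by simp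
  qed (use vn_ge0 in auto)
  also have "\<dots> \<le> Y powr K * (4 * A * \<Lambda> * Cb * Y powr t * Y powr s * vn c)"
    using T1b T2b by (intro mult_left_mono) auto
  finally show ?thesis
    unfolding T1_def T2_def \<kappa>_def K_def \<Lambda>_def NN_def J_def by (simp add: algebra_simps)
qed

end

context svoa begin

lemma Lam_bound:
  assumes "real NN + 2 \<le> Y" "0 \<le> J" "real_of_int J \<le> Y" "Y \<ge> 1"
  shows "Lam NN J \<le> (3 + cmod ccv) * Y ^ 4"
proof -
  have "X J NN = 2 * real_of_int J * real NN + cmod ccv * real_of_int J ^ 3" unfolding X_def by simp
  also have "\<dots> \<le> 2 * Y * Y + cmod ccv * Y ^ 3"
  proof (rule add_mono)
    show "2 * real_of_int J * real NN \<le> 2 * Y * Y" using assms by (intro mult_mono) auto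
    show "cmod ccv * real_of_int J ^ 3 \<le> cmod ccv * Y ^ 3"
      by (rule mult_left_mono) (use assms in \<open>auto intro: power_mono\<close>)
  qed
  finally have XJ: "X J NN \<le> 2 * Y * Y + cmod ccv * Y ^ 3" .
  have X0: "X J NN \<ge> 0" using X_ge0 assms(2) by simp
  have "Lam NN J = (real NN + 2) * X J NN + 1" unfolding Lam_def by simp
  also have "\<dots> \<le> Y * (2 * Y * Y + cmod ccv * Y ^ 3) + 1"
    using assms X0 XJ by (simp add: mult_mono)
  also have "\<dots> = 2 * Y ^ 3 + cmod ccv * Y ^ 4 + 1" by (simp add: power_def algebra_simps eval_nat_numeral)
  also have "\<dots> \<le> 2 * Y ^ 4 + cmod ccv * Y ^ 4 + Y ^ 4"
  proof -
    have "Y ^ 3 \<le> Y ^ 4" using assms(4) by (intro power_increasing) auto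
    moreover have "1 \<le> Y ^ 4" using assms(4) by simp
    ultimately show ?thesis by simp
  qed
  also have "\<dots> = (3 + cmod ccv) * Y ^ 4" by (simp add: algebra_simps)
  finally show ?thesis .
qed

lemma main_bound:
  assumes hb: "hom d b"
    and eb: "\<forall>m M. opnorm sc md cv ip M (pmode sc md cv b m)
            \<le> ereal (Cb * (1 + \<bar>real_of_int m\<bar>) powr t * (1 + \<bar>real_of_int M\<bar>) powr s)"
    and Cb: "Cb \<ge> 0" "t \<ge> 0" "s \<ge> 0"
    and ha: "hom da a" "\<forall>k>0. L k a = 0" "da \<noteq> 1"
    and A: "A \<ge> 0" "\<forall>y \<in> Vle' (int (n0 + d)). vn (md a (int da - 1) y) \<le> A * vn y"
    and c: "c \<in> Vle' (int n0)"
  shows "vn (md (md b (int d - 1 - int p) a) (int da + int p - 1) c)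
     \<le> A * (4 * Cb * (3 + cmod ccv) * (real d + real p + real (nat \<bar>int d - 1 - int p\<bar>) + 3)
                powr (5 + real (nat \<bar>int d - 1 - int p\<bar>) + t + s))
         * (1 + real n0) powr (5 + real (nat \<bar>int d - 1 - int p\<bar>) + t + s) * vn c"
proof -
  define \<kappa> where "\<kappa> = int d - 1 - int p"
  define q where "q = int da + int p - 1"
  define K where "K = nat \<bar>\<kappa>\<bar>"
  define K0 where "K0 = real d + real p + real K + 3"
  define E where "E = 5 + real K + t + s"
  define Y where "Y = K0 * (1 + real n0)"
  define \<Lambda> where "\<Lambda> = Lam (n0 + d) (int (n0 + d + p + 1))"
  have K0: "K0 \<ge> 3" unfolding K0_def by simp
  have Y: "real n0 + real d + real p + 2 \<le> Y"
  proof -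
    have "real n0 + real d + real p + 2 \<le> K0 + 3 * real n0" unfolding K0_def by simp
    also have "\<dots> \<le> K0 + K0 * real n0" using K0 by (intro add_left_mono mult_right_mono) auto
    finally show ?thesis unfolding Y_def by (simp add: algebra_simps)
  qed
  have Y1: "Y \<ge> 1" using Y by simp
  define F where "F i = sc ((-1)^i * ((of_int \<kappa>) gchoose i))
            (md b (\<kappa> - int i) (md a (q + int i) c)
             - sc ((-1) powi \<kappa>) (md a (q + \<kappa> - int i) (md b (int i) c)))" for i
  obtain N0 where N0: "\<forall>N\<ge>N0. md (md b \<kappa> a) q c = (\<Sum>i\<le>N. F i)"
    using iterate[OF hb, of \<kappa> a q c] unfolding F_def by blast
  define N where "N = max N0 (n0 + d)"
  have F0: "F i = 0" if "i > n0 + d" for i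
  proof -
    have "md a (q + int i) c \<in> Vle' (int n0 + int da - (q + int i) - 1)"
      by (rule mode_Vle[OF ha(1) c])
    hence z1: "md a (q + int i) c = 0" by (rule Vle_negative) (use that in \<open>simp add: q_def\<close>)
    have "md b (int i) c \<in> Vle' (int n0 + int d - int i - 1)"
      by (rule mode_Vle[OF hb c])
    hence z2: "md b (int i) c = 0" by (rule Vle_negative) (use that in simp)
    show ?thesis unfolding F_def z1 z2 by simp
  qed
  have "md (md b \<kappa> a) q c = (\<Sum>i\<le>N. F i)" using N0 unfolding N_def by simp
  also have "\<dots> = (\<Sum>i\<le>n0 + d. F i)"
    by (rule sum.mono_neutral_right) (use F0 in \<open>auto simp: N_def\<close>)
  finally have eq: "md (md b \<kappa> a) q c = (\<Sum>i\<le>n0 + d. F i)" .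
  define B where "B = Y powr K * (4 * A * \<Lambda> * Cb * Y powr t * Y powr s) * vn c"
  have B0: "B \<ge> 0" unfolding B_def
    using A Cb vn_ge0[of c] Lam_ge1[of "int (n0 + d + p + 1)" "n0 + d"] unfolding \<Lambda>_def by simp
  have "vn (md (md b \<kappa> a) q c) \<le> (\<Sum>i\<le>n0 + d. vn (F i))" unfolding eq by (rule vn_sum)
  also have "\<dots> \<le> (\<Sum>i\<le>n0 + d. B)"
  proof (rule sum_mono)
    fix i assume "i \<in> {..n0 + d}"
    hence i: "i \<le> n0 + d" by simp
    show "vn (F i) \<le> B"
      unfolding F_def B_def \<kappa>_def q_def K_def \<Lambda>_def
      using term_bound[OF hb eb Cb ha A c Y i] by (simp add: algebra_simps)
  qed
  also have "\<dots> = (real (n0 + d) + 1) * B" by simp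
  also have "\<dots> \<le> Y * B" using Y B0 by (intro mult_right_mono) auto
  also have "\<dots> \<le> A * (4 * Cb * (3 + cmod ccv) * K0 powr E) * (1 + real n0) powr E * vn c"
  proof -
    have L: "\<Lambda> \<le> (3 + cmod ccv) * Y ^ 4" unfolding \<Lambda>_def
      by (rule Lam_bound) (use Y Y1 in auto)
    have "Y * B = Y powr 1 * Y powr K * Y powr t * Y powr s * (4 * A * Cb * vn c) * \<Lambda>"
      unfolding B_def using Y1 by (simp add: algebra_simps)
    also have "\<dots> \<le> Y powr 1 * Y powr K * Y powr t * Y powr s * (4 * A * Cb * vn c) * ((3 + cmod ccv) * Y ^ 4)"
      by (rule mult_left_mono[OF L]) (use A Cb vn_ge0[of c] in simp)
    also have "Y ^ 4 = Y powr 4" using Y1 by (simp add: powr_realpow)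
    also have "Y powr 1 * Y powr K * Y powr t * Y powr s * (4 * A * Cb * vn c) * ((3 + cmod ccv) * Y powr 4)
       = (4 * A * Cb * vn c * (3 + cmod ccv)) * (Y powr 1 * Y powr K * Y powr t * Y powr s * Y powr 4)"
      by (simp add: algebra_simps)
    also have "Y powr 1 * Y powr K * Y powr t * Y powr s * Y powr 4 = Y powr (1 + real K + t + s + 4)"
      by (simp only: powr_add)
    also have "1 + real K + t + s + 4 = E" unfolding E_def by simp
    also have "Y powr E = K0 powr E * (1 + real n0) powr E"
      unfolding Y_def using K0 by (simp add: powr_mult)
    finally show ?thesis by (simp add: algebra_simps)
  qed
  finally show ?thesis unfolding \<kappa>_def q_def K0_def E_def K_def .
qed

end

context svoa begin

lemma final:
  assumes hb0: "L 0 b = sc (of_nat d) b" and ebd: "energy_bounded sc md cv ip b"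
    and pa: "primary sc md cv a da" and da1: "da \<noteq> 1"
  shows "\<exists>C r::real. C \<ge> 0 \<and> r \<ge> 0 \<and>
           (\<forall>n::int. opnorm sc md cv ip n (pmode sc md cv (pmode sc md cv b (- int p) a) 0)
              \<le> ereal (C * (1 + \<bar>real_of_int n\<bar>) powr r)
                 * opnorm sc md cv ip (n + int d) (pmode sc md cv a 0))"
proof -
  obtain s Cb t where st: "s \<ge> 0" "Cb \<ge> 0" "t \<ge> 0"
    and eb: "\<forall>m M. opnorm sc md cv ip M (pmode sc md cv b m)
            \<le> ereal (Cb * (1 + \<bar>real_of_int m\<bar>) powr t * (1 + \<bar>real_of_int M\<bar>) powr s)"
    using ebd unfolding energy_bounded_def by blast
  have hb: "hom d b" using hb0 unfolding hom_def .
  have ha: "hom da a" "\<forall>k>0. L k a = 0" using pa unfolding primary_def hom_def by auto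
  define \<kappa> where "\<kappa> = int d - 1 - int p"
  define q where "q = int da + int p - 1"
  define K where "K = nat \<bar>\<kappa>\<bar>"
  define E where "E = 5 + real K + t + s"
  define Cst where "Cst = 4 * Cb * (3 + cmod ccv) * (real d + real p + real K + 3) powr E"
  define C where "C = Cst + 1"
  have Cst0: "Cst \<ge> 0" unfolding Cst_def using st by simp
  have C0: "C > 0" unfolding C_def using Cst0 by simp
  have E0: "E \<ge> 0" unfolding E_def using st by simp
  define R where "R = pmode sc md cv (pmode sc md cv b (- int p) a) 0"
  define a0 where "a0 = pmode sc md cv a 0"
  have x_eq: "pmode sc md cv b (- int p) a = md b \<kappa> a"
    using pmode_hom[OF hb] unfolding \<kappa>_def by (simp add: algebra_simps)
  have xh: "hom (da + p) (md b \<kappa> a)"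
    unfolding hom_def using mode_hom_eig[OF hb ha(1), of \<kappa>] unfolding \<kappa>_def by simp
  have R_eq: "R = md (md b \<kappa> a) q"
    unfolding R_def x_eq using pmode_hom[OF xh] unfolding q_def by (intro ext) simp
  have a0_eq: "a0 = md a (int da - 1)"
    unfolding a0_def using pmode_hom[OF ha(1)] by (intro ext) simp
  have R0: "R 0 = 0" unfolding R_eq by simp
  have a00: "a0 0 = 0" unfolding a0_eq by simp
  have "\<forall>n::int. opnorm sc md cv ip n R \<le> ereal (C * (1 + \<bar>real_of_int n\<bar>) powr E) * opnorm sc md cv ip (n + int d) a0"
  proof
    fix n :: int
    define P where "P = C * (1 + \<bar>real_of_int n\<bar>) powr E"
    have P0: "P > 0" unfolding P_def using C0 by simp
    define \<Omega> where "\<Omega> = opnorm sc md cv ip (n + int d) a0"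
    have \<Omega>0: "\<Omega> \<ge> 0" unfolding \<Omega>_def by (rule opnorm_ge0[where R=a0, OF a00])
    show "opnorm sc md cv ip n R \<le> ereal P * \<Omega>"
    proof (cases "n < 0")
      case True
      have "opnorm sc md cv ip n R \<le> ereal 0"
      proof (rule opnorm_le)
        show "\<forall>x\<in>Vle' n. vn (R x) \<le> 0 * vn x"
        proof
          fix x assume "x \<in> Vle' n"
          hence "x = 0" using Vle_negative True by blast
          thus "vn (R x) \<le> 0 * vn x" using R0 by simp
        qed
      qed simp
      also have "ereal 0 \<le> ereal P * \<Omega>" using P0 \<Omega>0 by (cases \<Omega>) auto
      finally show ?thesis .
    next
      case False
      define n0 where "n0 = nat n"
      have n0: "n = int n0" using False unfolding n0_def by simp
      show ?thesis
      proof (cases \<Omega> rule: ereal_cases)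
        case (real A)
        have A0: "A \<ge> 0" using \<Omega>0 real by simp
        have Ab: "\<forall>y \<in> Vle' (int (n0 + d)). vn (md a (int da - 1) y) \<le> A * vn y"
        proof
          fix y assume "y \<in> Vle' (int (n0 + d))"
          hence y: "y \<in> Vle' (n + int d)" using n0 by simp
          have "opnorm sc md cv ip (n + int d) a0 \<le> ereal A" using real unfolding \<Omega>_def by simp
          from opnorm_bound[OF _ this y] show "vn (md a (int da - 1) y) \<le> A * vn y"
            unfolding a0_eq by (simp add: md_scale)
        qed
        have "opnorm sc md cv ip n R \<le> ereal (P * A)"
        proof (rule opnorm_le)
          show "0 \<le> P * A" using P0 A0 by simp
          show "\<forall>x\<in>Vle' n. vn (R x) \<le> P * A * vn x"
          proof
            fix c assume "c \<in> Vle' n"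
            hence c: "c \<in> Vle' (int n0)" using n0 by simp
            have "vn (R c) \<le> A * Cst * (1 + real n0) powr E * vn c"
              unfolding R_eq \<kappa>_def q_def Cst_def E_def K_def
              by (rule main_bound[OF hb eb st(2,3,1) ha da1 A0 Ab c])
            also have "\<dots> \<le> P * A * vn c"
            proof -
              have "A * Cst * (1 + real n0) powr E \<le> A * (C * (1 + real n0) powr E)"
              proof -
                have "Cst * (1 + real n0) powr E \<le> (Cst + 1) * (1 + real n0) powr E"
                  by (rule mult_right_mono) auto
                thus ?thesis unfolding C_def using A0 by (simp add: mult.assoc mult_left_mono)
              qed
              also have "\<dots> = P * A" unfolding P_def n0 by simp
              finally show ?thesis using vn_ge0[of c] by (intro mult_right_mono) auto
            qed
            finally show "vn (R c) \<le> P * A * vn c" .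
          qed
        qed
        also have "ereal (P * A) = ereal P * \<Omega>" using real by simp
        finally show ?thesis .
      next
        case PInf
        thus ?thesis using P0 by simp
      next
        case MInf
        thus ?thesis using \<Omega>0 by simp
      qed
    qed
  qed
  thus ?thesis unfolding R_def a0_def using C0 E0 by (intro exI[of _ C] exI[of _ E]) auto
qed

end

theorem mainTheorem10:
  fixes sc :: "complex \<Rightarrow> 'v::ab_group_add \<Rightarrow> 'v"
    and md :: "'v \<Rightarrow> int \<Rightarrow> 'v \<Rightarrow> 'v"
    and vac cv :: 'v
    and ip :: "'v \<Rightarrow> 'v \<Rightarrow> complex"
    and star :: "'v \<Rightarrow> 'v"
    and a b :: 'v
    and d da p :: nat
  assumes "is_simple_unitary_CFT_VOA sc md vac cv ip star"
    and "Vir md cv 0 b = sc (of_nat d) b"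
    and "energy_bounded sc md cv ip b"
    and "primary sc md cv a da"
    and "da \<noteq> 1"
  shows "\<exists>C r::real. C \<ge> 0 \<and> r \<ge> 0 \<and>
           (\<forall>n::int. opnorm sc md cv ip n (pmode sc md cv (pmode sc md cv b (- int p) a) 0)
              \<le> ereal (C * (1 + \<bar>real_of_int n\<bar>) powr r)
                 * opnorm sc md cv ip (n + int d) (pmode sc md cv a 0))"
proof -
  interpret svoa sc md vac cv ip star by unfold_locales (rule assms(1))
  show ?thesis by (rule final[OF assms(2-5)])
qed

end
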